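(* Let $\Phi$ be a strict Young function and let $a\in L^\infty(\mathbf R^d\setminus\{0\})$ be such that $$\sup_{R>0}\Big(R^{-d+2|\alpha|}\int_{A_R}|\partial^\alpha a(\xi)|^2\,d\xi\Big)<\infty$$ for every $\alpha\in\mathbf N^d$ with $|\alpha|\le[\tfrac d2]+1$, where $A_R=\{\xi\in\mathbf R^d: R<|\xi|<2R\}$. Then $a(D)$ is continuous on $L^\Phi(\mathbf R^d)$ and on $wL^\Phi(\mathbf R^d)$, i.e. there is $C>0$ with $\|a(D)f\|_{L^\Phi}\le C\|f\|_{L^\Phi}$ for $f\in L^\Phi(\mathbf R^d)$ and $\|a(D)f\|_{wL^\Phi}\le C\|f\|_{wL^\Phi}$ for $f\in wL^\Phi(\mathbf R^d)$.
   Context: A Young function is a map $\Phi:[0,\infty)\to[0,\infty]$ which is convex, satisfies $\Phi(0)=0$ and $\lim_{t\to\infty}\Phi(t)=+\infty$. $\Phi$ satisfies the $\Delta_2$-condition if there is $C\ge 1$ with $\Phi(2t)\le C\Phi(t)$ for all $t\ge 0$; it satisfies the $\Lambda$-condition if there is $p>1$ with $\Phi(ct)\le c^p\Phi(t)$ for all $t\ge0$, $c\in(0,1]$. A Young function is strict if it is finite-valued on $[0,\infty)$ and satisfies both the $\Delta_2$- and the $\Lambda$-condition. $L^\Phi(\mathbf R^d)$ is the set of measurable $f$ with $\|f\|_{L^\Phi}=\inf\{\lambda>0:\int\Phi(|f|/\lambda)\,dx\le1\}<\infty$. With $\mu_f(t)$ the Lebesgue measure of $\{x:|f(x)|>t\}$,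 the weak Orlicz space $wL^\Phi(\mathbf R^d)$ is the set of measurable $f$ with $\|f\|_{wL^\Phi}=\inf\{\lambda>0:\sup_{t>0}\Phi(t/\lambda)\mu_f(t)\le 1\}<\infty$. The operator $a(D)f=\mathcal F^{-1}(a\widehat f)$ is bounded on each $L^p$, $1<p<\infty$ (Hörmander's multiplier theorem), hence extends uniquely to $L^{p_0}+L^{p_1}$ for $1<p_0<p_1<\infty$; the claim concerns this extension, which contains $L^\Phi$ and $wL^\Phi$ for suitable such $p_0,p_1$. *)

theory Defs
  imports "HOL-Analysis.Analysis"
begin

text \<open>A strict Young function is finite-valued, so it is represented as a real function on
  [0,\<infinity>) (values outside [0,\<infinity>) are irrelevant).\<close>

definition young_function :: "(real \<Rightarrow> real) \<Rightarrow> bool" where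
  "young_function \<Phi> \<longleftrightarrow> convex_on {0..} \<Phi> \<and> \<Phi> 0 = 0 \<and> (\<forall>t\<ge>0. \<Phi> t \<ge> 0)
     \<and> filterlim \<Phi> at_top at_top"

definition Delta2_cond :: "(real \<Rightarrow> real) \<Rightarrow> bool" where
  "Delta2_cond \<Phi> \<longleftrightarrow> (\<exists>C\<ge>1. \<forall>t\<ge>0. \<Phi> (2 * t) \<le> C * \<Phi> t)"

definition Lambda_cond :: "(real \<Rightarrow> real) \<Rightarrow> bool" where
  "Lambda_cond \<Phi> \<longleftrightarrow> (\<exists>p>1. \<forall>t\<ge>0. \<forall>c. 0 < c \<and> c \<le> 1 \<longrightarrow> \<Phi> (c * t) \<le> c powr p * \<Phi> t)"

definition strict_young :: "(real \<Rightarrow> real) \<Rightarrow> bool" where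
  "strict_young \<Phi> \<longleftrightarrow> young_function \<Phi> \<and> Delta2_cond \<Phi> \<and> Lambda_cond \<Phi>"

definition orlicz_set :: "(real \<Rightarrow> real) \<Rightarrow> ('a::euclidean_space \<Rightarrow> complex) \<Rightarrow> real set" where
  "orlicz_set \<Phi> f = {s. s > 0 \<and> (\<integral>\<^sup>+ x. ennreal (\<Phi> (cmod (f x) / s)) \<partial>lebesgue) \<le> 1}"

definition in_orlicz :: "(real \<Rightarrow> real) \<Rightarrow> ('a::euclidean_space \<Rightarrow> complex) \<Rightarrow> bool" where
  "in_orlicz \<Phi> f \<longleftrightarrow> f \<in> borel_measurable lebesgue \<and> orlicz_set \<Phi> f \<noteq> {}"

definition orlicz_norm :: "(real \<Rightarrow> real) \<Rightarrow> ('a::euclidean_space \<Rightarrow> complex) \<Rightarrow> real" where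
  "orlicz_norm \<Phi> f = Inf (orlicz_set \<Phi> f)"

definition distrib_fun :: "('a::euclidean_space \<Rightarrow> complex) \<Rightarrow> real \<Rightarrow> ennreal" where
  "distrib_fun f t = emeasure lebesgue {x. cmod (f x) > t}"

definition weak_orlicz_set :: "(real \<Rightarrow> real) \<Rightarrow> ('a::euclidean_space \<Rightarrow> complex) \<Rightarrow> real set" where
  "weak_orlicz_set \<Phi> f =
     {s. s > 0 \<and> (SUP t\<in>{0<..}. ennreal (\<Phi> (t / s)) * distrib_fun f t) \<le> 1}"

definition in_weak_orlicz :: "(real \<Rightarrow> real) \<Rightarrow> ('a::euclidean_space \<Rightarrow> complex) \<Rightarrow> bool" where
  "in_weak_orlicz \<Phi> f \<longleftrightarrow> f \<in> borel_measurable lebesgue \<and> weak_orlicz_set \<Phi> f \<noteq> {}"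

definition weak_orlicz_norm :: "(real \<Rightarrow> real) \<Rightarrow> ('a::euclidean_space \<Rightarrow> complex) \<Rightarrow> real" where
  "weak_orlicz_norm \<Phi> f = Inf (weak_orlicz_set \<Phi> f)"

definition in_Lp :: "real \<Rightarrow> ('a::euclidean_space \<Rightarrow> complex) \<Rightarrow> bool" where
  "in_Lp p f \<longleftrightarrow> f \<in> borel_measurable lebesgue \<and>
     (\<integral>\<^sup>+ x. ennreal (cmod (f x) powr p) \<partial>lebesgue) < \<infinity>"

definition Lp_norm :: "real \<Rightarrow> ('a::euclidean_space \<Rightarrow> complex) \<Rightarrow> real" where
  "Lp_norm p f = enn2real (\<integral>\<^sup>+ x. ennreal (cmod (f x) powr p) \<partial>lebesgue) powr (1 / p)"

definition Lp_sum_space :: "('a::euclidean_space \<Rightarrow> complex) set" where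
  "Lp_sum_space = {f. \<exists>g h p0 p1. 1 < p0 \<and> p0 < p1 \<and> in_Lp p0 g \<and> in_Lp p1 h \<and>
                        f = (\<lambda>x. g x + h x)}"

definition ess_bounded :: "('a::euclidean_space \<Rightarrow> complex) \<Rightarrow> bool" where
  "ess_bounded a \<longleftrightarrow> a \<in> borel_measurable lebesgue \<and> (\<exists>M. AE x in lebesgue. cmod (a x) \<le> M)"

fun deriv_list :: "'a::euclidean_space list \<Rightarrow> ('a \<Rightarrow> complex) \<Rightarrow> ('a \<Rightarrow> complex)" where
  "deriv_list [] f = f"
| "deriv_list (b # bs) f = (\<lambda>x. frechet_derivative (deriv_list bs f) (at x) b)"

text \<open>Multi-indices are functions \<open>\<alpha> :: 'a \<Rightarrow> nat\<close>; only their values on \<open>Basis\<close> matter.\<close>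
definition mindex_abs :: "('a::euclidean_space \<Rightarrow> nat) \<Rightarrow> nat" where
  "mindex_abs \<alpha> = (\<Sum>b\<in>Basis. \<alpha> b)"

definition mderiv :: "('a::euclidean_space \<Rightarrow> nat) \<Rightarrow> ('a \<Rightarrow> complex) \<Rightarrow> ('a \<Rightarrow> complex)" where
  "mderiv \<alpha> f = deriv_list (SOME bs. \<forall>b. count_list bs b = (if b \<in> Basis then \<alpha> b else 0)) f"

definition smooth_fun :: "('a::euclidean_space \<Rightarrow> complex) \<Rightarrow> bool" where
  "smooth_fun f \<longleftrightarrow> (\<forall>bs. set bs \<subseteq> Basis \<longrightarrow> deriv_list bs f differentiable_on UNIV)"

definition test_fun :: "'a::euclidean_space set \<Rightarrow> ('a \<Rightarrow> complex) \<Rightarrow> bool" where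
  "test_fun U \<phi> \<longleftrightarrow> smooth_fun \<phi> \<and> compact (closure {x. \<phi> x \<noteq> 0}) \<and> closure {x. \<phi> x \<noteq> 0} \<subseteq> U"

definition weak_mderiv :: "'a::euclidean_space set \<Rightarrow> ('a \<Rightarrow> nat) \<Rightarrow> ('a \<Rightarrow> complex) \<Rightarrow> ('a \<Rightarrow> complex) \<Rightarrow> bool" where
  "weak_mderiv U \<alpha> a g \<longleftrightarrow>
     (\<forall>K. compact K \<and> K \<subseteq> U \<longrightarrow> set_integrable lebesgue K g \<and> set_integrable lebesgue K a) \<and>
     (\<forall>\<phi>. test_fun U \<phi> \<longrightarrow>
        (\<integral>x. a x * mderiv \<alpha> \<phi> x \<partial>lebesgue) = (-1) ^ mindex_abs \<alpha> * (\<integral>x. g x * \<phi> x \<partial>lebesgue))"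

definition annulus :: "real \<Rightarrow> 'a::euclidean_space set" where
  "annulus R = {\<xi>. R < norm \<xi> \<and> norm \<xi> < 2 * R}"

definition fourier :: "('a::euclidean_space \<Rightarrow> complex) \<Rightarrow> 'a \<Rightarrow> complex" where
  "fourier f \<xi> = (\<integral>x. f x * cis (- 2 * pi * (x \<bullet> \<xi>)) \<partial>lebesgue)"

definition multiplier_op :: "('a::euclidean_space \<Rightarrow> complex) \<Rightarrow> ('a \<Rightarrow> complex) \<Rightarrow> 'a \<Rightarrow> complex" where
  "multiplier_op a f x = (\<integral>\<xi>. a \<xi> * fourier f \<xi> * cis (2 * pi * (x \<bullet> \<xi>)) \<partial>lebesgue)"

text \<open>\<open>T\<close> is the (a.e.-unique) extension of \<open>a(D)\<close> to the union of the spaces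
  \<open>L^{p0} + L^{p1}\<close> (\<open>1<p0<p1<\<infinity>\<close>): it agrees with \<open>F^{-1}(a F \<phi>)\<close> on test functions,
  is bounded on every \<open>L^p\<close>, \<open>1<p<\<infinity>\<close>, and is linear (a.e.).\<close>
definition is_multiplier_extension ::
  "('a::euclidean_space \<Rightarrow> complex) \<Rightarrow> (('a \<Rightarrow> complex) \<Rightarrow> ('a \<Rightarrow> complex)) \<Rightarrow> bool" where
  "is_multiplier_extension a T \<longleftrightarrow>
     (\<forall>\<phi>. test_fun UNIV \<phi> \<longrightarrow> (AE x in lebesgue. T \<phi> x = multiplier_op a \<phi> x)) \<and>
     (\<forall>p. 1 < p \<longrightarrow> (\<exists>C. \<forall>f. in_Lp p f \<longrightarrow> in_Lp p (T f) \<and> Lp_norm p (T f) \<le> C * Lp_norm p f)) \<and>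
     (\<forall>f g. f \<in> Lp_sum_space \<and> g \<in> Lp_sum_space \<longrightarrow>
        (AE x in lebesgue. T (\<lambda>y. f y + g y) x = T f x + T g x)) \<and>
     (\<forall>c f. f \<in> Lp_sum_space \<longrightarrow> (AE x in lebesgue. T (\<lambda>y. c * f y) x = c * T f x))"

end

theory Submission
  imports Defs "HOL-Library.Nat_Bijection"
begin

lemma powr_le1: "0 \<le> x \<Longrightarrow> x \<le> 1 \<Longrightarrow> 0 \<le> a \<Longrightarrow> x powr a \<le> (1::real)"
  using powr_mono2[of a x 1] by simp

lemma powr_le_self: "0 \<le> x \<Longrightarrow> x \<le> 1 \<Longrightarrow> 1 \<le> a \<Longrightarrow> x powr a \<le> (x::real)"
  by (cases "x = 0") (auto intro: powr_le_one_le)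

locale psi_fun =
  fixes \<Psi> :: "real \<Rightarrow> real" and p q D :: real
  assumes p_gt: "p > 1" and q_ge: "q \<ge> 0" and D_pos: "D > 0"
    and zero: "\<Psi> 0 = 0"
    and nonneg: "\<And>y. y \<ge> 0 \<Longrightarrow> \<Psi> y \<ge> 0"
    and pos: "\<And>y. y > 0 \<Longrightarrow> \<Psi> y > 0"
    and mono: "\<And>x y. 0 \<le> x \<Longrightarrow> x \<le> y \<Longrightarrow> \<Psi> x \<le> \<Psi> y"
    and lam: "\<And>y c. y \<ge> 0 \<Longrightarrow> 0 < c \<Longrightarrow> c \<le> 1 \<Longrightarrow> \<Psi> (c * y) \<le> c powr p * \<Psi> y"
    and up: "\<And>y l. y \<ge> 0 \<Longrightarrow> l \<ge> 1 \<Longrightarrow> \<Psi> (l * y) \<le> D * l powr q * \<Psi> y"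

lemma psi_fun_scale:
  assumes "psi_fun \<Psi> p q D" "s > 0"
  shows "psi_fun (\<lambda>y. \<Psi> (y / s)) p q D"
proof -
  interpret psi_fun \<Psi> p q D by fact
  show ?thesis
  proof
    show "\<And>y c. y \<ge> 0 \<Longrightarrow> 0 < c \<Longrightarrow> c \<le> 1 \<Longrightarrow> \<Psi> (c * y / s) \<le> c powr p * \<Psi> (y / s)"
      using lam assms(2) by (metis divide_nonneg_pos times_divide_eq_right)
    show "\<And>y l. y \<ge> 0 \<Longrightarrow> l \<ge> 1 \<Longrightarrow> \<Psi> (l * y / s) \<le> D * l powr q * \<Psi> (y / s)"
      using up assms(2) by (metis divide_nonneg_pos times_divide_eq_right)
  qed (use p_gt q_ge D_pos zero nonneg pos mono assms(2) in \<open>auto simp: divide_right_mono\<close>)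
qed

lemma (in psi_fun) div_le:
  assumes "y \<ge> 0" "K \<ge> 1"
  shows "\<Psi> (y / K) \<le> \<Psi> y / K"
proof -
  have "\<Psi> (y / K) = \<Psi> ((1/K) * y)" by simp
  also have "\<dots> \<le> (1/K) powr p * \<Psi> y" by (rule lam) (use assms in auto)
  also have "\<dots> \<le> (1/K) * \<Psi> y"
  proof (rule mult_right_mono)
    show "(1/K) powr p \<le> 1/K" using assms p_gt by (intro powr_le_self) auto
  qed (use assms nonneg[of y] in auto)
  finally show ?thesis by simp
qed

lemma strict_young_psi:
  assumes "strict_young \<Phi>"
  shows "\<exists>p q D. psi_fun \<Phi> p q D"
proof -
  from assms obtain p where p: "p > 1" and lam: "\<And>t c. t \<ge> 0 \<Longrightarrow> 0 < c \<Longrightarrow> c \<le> 1 \<Longrightarrow> \<Phi> (c * t) \<le> c powr p * \<Phi> t"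
    unfolding strict_young_def Lambda_cond_def by blast
  from assms obtain C where C: "C \<ge> 1" and d2: "\<And>t. t \<ge> 0 \<Longrightarrow> \<Phi> (2 * t) \<le> C * \<Phi> t"
    unfolding strict_young_def Delta2_cond_def by blast
  have yf: "\<Phi> 0 = 0" "\<And>t. t \<ge> 0 \<Longrightarrow> \<Phi> t \<ge> 0" "filterlim \<Phi> at_top at_top"
    using assms unfolding strict_young_def young_function_def by auto
  have mono: "\<Phi> x \<le> \<Phi> y" if "0 \<le> x" "x \<le> y" for x y
  proof (cases "x = 0")
    case True then show ?thesis using yf that by auto
  next
    case False
    then have "\<Phi> ((x/y) * y) \<le> (x/y) powr p * \<Phi> y" using that by (intro lam) auto
    also have "\<dots> \<le> 1 * \<Phi> y"
    proof (rule mult_right_mono)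
      have "x/y \<le> 1" "x/y \<ge> 0" using that False by auto
      then show "(x/y) powr p \<le> 1" using p by (intro powr_le1) auto
    qed (use yf(2)[of y] that in auto)
    finally show ?thesis using False that by simp
  qed
  have iter: "\<Phi> (2^n * t) \<le> C^n * \<Phi> t" if "t \<ge> 0" for n t
  proof (induction n)
    case 0 then show ?case by simp
  next
    case (Suc n)
    have "\<Phi> (2^Suc n * t) = \<Phi> (2 * (2^n * t))" by (simp add: mult.assoc)
    also have "\<dots> \<le> C * \<Phi> (2^n*t)" using d2 that by simp
    also have "\<dots> \<le> C * (C^n * \<Phi> t)" using Suc C by (intro mult_left_mono) auto
    finally show ?case by (simp add: mult.assoc)
  qed
  define q where "q = log 2 C"
  have up: "\<Phi> (l * y) \<le> C * l powr q * \<Phi> y" if "y \<ge> 0" "l \<ge> 1" for y l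
  proof -
    define n where "n = nat \<lceil>log 2 l\<rceil>"
    have lg: "log 2 l \<ge> 0" using that by simp
    have n1: "log 2 l \<le> real n" using lg unfolding n_def by linarith
    have n2: "real n \<le> log 2 l + 1" using lg unfolding n_def by linarith
    have "l = 2 powr (log 2 l)" using that by simp
    also have "\<dots> \<le> 2 powr real n" using n1 by (intro powr_mono) auto
    finally have "l \<le> 2 powr real n" .
    then have l2: "l \<le> 2^n" by (simp add: powr_realpow)
    have "\<Phi> (l*y) \<le> \<Phi> (2^n * y)" using that l2 by (intro mono mult_right_mono) auto
    also have "\<dots> \<le> C^n * \<Phi> y" using iter that by auto
    also have "C^n = C powr real n" using C by (simp add: powr_realpow)
    also have "\<dots> \<le> C powr (log 2 l + 1)" using C n2 by (intro powr_mono) auto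
    also have "\<dots> = C * l powr q"
    proof -
      have "C powr (log 2 l + 1) = C * C powr (log 2 l)" using C by (simp add: powr_add)
      also have "C powr (log 2 l) = l powr q"
        using C that unfolding q_def
        by (simp add: powr_def log_def)
      finally show ?thesis .
    qed
    finally show ?thesis using yf(2)[OF that(1)] by (simp add: mult_right_mono)
  qed
  have pos: "\<Phi> y > 0" if "y > 0" for y
  proof (rule ccontr)
    assume "\<not> \<Phi> y > 0"
    then have z: "\<Phi> y = 0" using yf(2)[of y] that by auto
    obtain t0 where t0: "\<And>t. t \<ge> t0 \<Longrightarrow> \<Phi> t \<ge> 1"
      using yf(3) unfolding filterlim_at_top eventually_at_top_linorder by blast
    define l where "l = max t0 y / y"
    have "l \<ge> 1" using that unfolding l_def by auto
    then have "\<Phi> (l * y) \<le> 0" using up[of y l] that z by auto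
    moreover have "l * y = max t0 y" using that unfolding l_def by auto
    ultimately show False using t0[of "max t0 y"] by auto
  qed
  have "psi_fun \<Phi> p q C"
    by unfold_locales (use p C yf mono lam up pos in \<open>auto simp: q_def\<close>)
  then show ?thesis by blast
qed

lemma lset:
  fixes z :: "'a::euclidean_space \<Rightarrow> real"
  assumes [measurable]: "z \<in> borel_measurable lebesgue"
  shows "{x. c < z x} \<in> sets lebesgue"
proof -
  have "{x \<in> space lebesgue. c < z x} \<in> sets lebesgue" by measurable
  then show ?thesis by simp
qed

lemma enn_le_suminf: "f i \<le> (\<Sum>i. f i :: ennreal)"
  using sum_le_suminf[OF summableI, of "{i}" f] by simp

lemma geom_enn: "0 \<le> r \<Longrightarrow> r < 1 \<Longrightarrow> (\<Sum>n. ennreal (c * r ^ n)) = ennreal (c / (1 - r))" if "c \<ge> 0"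
proof (intro suminf_ennreal_eq)
  assume r: "0 \<le> r" "r < 1"
  have "(\<lambda>n. c * r ^ n) sums (c * (1 / (1 - r)))" by (rule sums_mult[OF geometric_sums]) (use r in auto)
  then show "(\<lambda>n. c * r ^ n) sums (c / (1 - r))" by simp
qed (use that in auto)

lemma meas_bound:
  assumes "ennreal a * m \<le> 1" "a > 0"
  shows "m \<le> ennreal (1 / a)"
proof -
  have "m = ennreal (1/a) * (ennreal a * m)"
    using assms(2) by (simp add: ennreal_mult[symmetric] mult.assoc[symmetric] del: ennreal_mult)
  also have "\<dots> \<le> ennreal (1/a) * 1" using assms(1) by (intro mult_left_mono) auto
  finally show ?thesis by simp
qed

lemma (in psi_fun) weak_I0:
  fixes z :: "'a::euclidean_space \<Rightarrow> real"
  assumes zm: "z \<in> borel_measurable lebesgue"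
    and W: "\<And>t. t > 0 \<Longrightarrow> ennreal (\<Psi> t) * emeasure lebesgue {x. t < z x} \<le> 1"
    and p0: "0 < p0" "p0 < p" and t: "t > 0"
  shows "(\<integral>\<^sup>+x. ennreal (if t < z x then z x powr p0 else 0) \<partial>lebesgue)
          \<le> ennreal ((2 powr p0 * t powr p0 / \<Psi> t) / (1 - 2 powr (p0 - p)))"
proof -
  define r where "r = 2 powr (p0 - p)"
  define K where "K = 2 powr p0 * t powr p0 / \<Psi> t"
  have r: "0 \<le> r" "r < 1" using p0 powr_less_mono[of "p0 - p" 0 2] unfolding r_def by auto
  have K: "K \<ge> 0" using pos[OF t] unfolding K_def by auto
  have pt: "\<And>x. ennreal (if t < z x then z x powr p0 else 0)
     \<le> (\<Sum>j. ennreal ((2^(j+1)*t) powr p0) * indicator {x. 2^j*t < z x} x)"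
  proof -
    fix x
    show "ennreal (if t < z x then z x powr p0 else 0)
     \<le> (\<Sum>j. ennreal ((2^(j+1)*t) powr p0) * indicator {x. 2^j*t < z x} x)"
    proof (cases "t < z x")
      case False then show ?thesis by simp
    next
      case True
      define L where "L = log 2 (z x / t)"
      have L: "L > 0" using True t unfolding L_def by (simp add: field_simps)
      define j where "j = nat (\<lceil>L\<rceil> - 1)"
      have j1: "real j < L" "L \<le> real j + 1" using L unfolding j_def by linarith+
      have "2 powr real j < 2 powr L" using j1 by (intro powr_less_mono) auto
      also have "2 powr L = z x / t" using True t unfolding L_def by simp
      finally have a: "2^j * t < z x" using t by (simp add: powr_realpow field_simps)
      have "z x / t = 2 powr L" using True t unfolding L_def by simp
      also have "\<dots> \<le> 2 powr (real j + 1)" using j1 by (intro powr_mono) auto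
      also have "2 powr (real j + 1) = 2^(j+1)" using powr_realpow[of 2 "Suc j"] by (simp add: add.commute)
      finally have b: "z x \<le> 2^(j+1) * t" using t by (simp add: field_simps)
      have "ennreal (if t < z x then z x powr p0 else 0) \<le> ennreal ((2^(j+1)*t) powr p0) * indicator {x. 2^j*t < z x} x"
        using True a b p0 t by (auto intro!: powr_mono2)
      also have "\<dots> \<le> (\<Sum>j. ennreal ((2^(j+1)*t) powr p0) * indicator {x. 2^j*t < z x} x)"
        by (rule enn_le_suminf)
      finally show ?thesis .
    qed
  qed
  have sets: "\<And>c. {x. c < z x} \<in> sets lebesgue" using zm by (rule lset)
  have "(\<integral>\<^sup>+x. ennreal (if t < z x then z x powr p0 else 0) \<partial>lebesgue)
       \<le> (\<integral>\<^sup>+x. (\<Sum>j. ennreal ((2^(j+1)*t) powr p0) * indicator {x. 2^j*t < z x} x) \<partial>lebesgue)"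
    by (intro nn_integral_mono pt)
  also have "\<dots> = (\<Sum>j. \<integral>\<^sup>+x. ennreal ((2^(j+1)*t) powr p0) * indicator {x. 2^j*t < z x} x \<partial>lebesgue)"
    using sets by (intro nn_integral_suminf) auto
  also have "\<dots> = (\<Sum>j. ennreal ((2^(j+1)*t) powr p0) * emeasure lebesgue {x. 2^j*t < z x})"
    using sets by (simp add: nn_integral_cmult_indicator)
  also have "\<dots> \<le> (\<Sum>j. ennreal (K * r^j))"
  proof (rule suminf_le[OF _ summableI summableI])
    fix j :: nat
    have tj: "2^j * t > 0" using t by simp
    have m: "emeasure lebesgue {x. 2^j*t < z x} \<le> ennreal (1 / \<Psi> (2^j*t))"
      by (rule meas_bound[OF W[OF tj] pos[OF tj]])
    have psi: "2 powr (real j * p) * \<Psi> t \<le> \<Psi> (2^j*t)"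
    proof -
      have "\<Psi> t = \<Psi> ((1/2^j) * (2^j*t))" by simp
      also have "\<dots> \<le> (1/2^j) powr p * \<Psi> (2^j*t)" using t by (intro lam) auto
      also have "(1/2^j) powr p = 1 / 2 powr (real j * p)"
        by (simp add: powr_divide powr_realpow[symmetric] powr_powr)
      finally show ?thesis using p_gt by (simp add: field_simps)
    qed
    have "(2^(j+1)*t) powr p0 / \<Psi> (2^j*t) \<le> K * r^j"
    proof -
      have e1: "(2^(j+1)*t) powr p0 = 2 powr p0 * t powr p0 * 2 powr (real j * p0)"
        using t by (simp add: powr_mult powr_realpow[symmetric] powr_powr powr_add algebra_simps)
      have e2: "r^j = 2 powr (real j * (p0 - p))" unfolding r_def by (simp add: powr_realpow[symmetric] powr_powr mult.commute)
      have pp: "\<Psi> t > 0" using pos t by auto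
      have "(2^(j+1)*t) powr p0 / \<Psi> (2^j*t) \<le> (2^(j+1)*t) powr p0 / (2 powr (real j * p) * \<Psi> t)"
        using psi pp pos[OF tj] by (intro divide_left_mono) auto
      also have "\<dots> = K * r^j"
        unfolding e1 e2 K_def using pp
        by (simp add: field_simps powr_diff[symmetric] right_diff_distrib powr_add[symmetric])
      finally show ?thesis .
    qed
    then have "ennreal ((2^(j+1)*t) powr p0) * ennreal (1 / \<Psi> (2^j*t)) \<le> ennreal (K * r^j)"
      using pos[OF tj] by (simp add: ennreal_mult[symmetric] ennreal_leI del: ennreal_mult)
    then show "ennreal ((2^(j+1)*t) powr p0) * emeasure lebesgue {x. 2^j*t < z x} \<le> ennreal (K * r^j)"
      using m by (meson mult_left_mono order_trans zero_le)
  qed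
  also have "\<dots> = ennreal (K / (1 - r))" using geom_enn[OF K r] .
  finally show ?thesis unfolding K_def r_def .
qed

lemma (in psi_fun) weak_I1:
  fixes z :: "'a::euclidean_space \<Rightarrow> real"
  assumes zm: "z \<in> borel_measurable lebesgue" and zn: "\<And>x. z x \<ge> 0"
    and W: "\<And>t. t > 0 \<Longrightarrow> ennreal (\<Psi> t) * emeasure lebesgue {x. t < z x} \<le> 1"
    and p1: "q < p1" and t: "t > 0"
  shows "(\<integral>\<^sup>+x. ennreal (if t < z x then 0 else z x powr p1) \<partial>lebesgue)
          \<le> ennreal ((D * 2 powr q * t powr p1 / \<Psi> t) / (1 - 2 powr (q - p1)))"
proof -
  define r where "r = 2 powr (q - p1)"
  define K where "K = D * 2 powr q * t powr p1 / \<Psi> t"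
  have r: "0 \<le> r" "r < 1" using p1 powr_less_mono[of "q - p1" 0 2] unfolding r_def by auto
  have K: "K \<ge> 0" using pos[OF t] D_pos unfolding K_def by auto
  have p1pos: "p1 > 0" using p1 q_ge by linarith
  have pt: "\<And>x. ennreal (if t < z x then 0 else z x powr p1)
     \<le> (\<Sum>j. ennreal ((t / 2^j) powr p1) * indicator {x. t / 2^(j+1) < z x} x)"
  proof -
    fix x
    show "ennreal (if t < z x then 0 else z x powr p1)
     \<le> (\<Sum>j. ennreal ((t / 2^j) powr p1) * indicator {x. t / 2^(j+1) < z x} x)"
    proof (cases "t < z x \<or> z x = 0")
      case True then show ?thesis by auto
    next
      case False
      then have zx: "0 < z x" "z x \<le> t" using zn[of x] by auto
      define L where "L = log 2 (t / z x)"
      have L: "L \<ge> 0" using zx t unfolding L_def by (simp add: field_simps)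
      define j where "j = nat \<lfloor>L\<rfloor>"
      have j1: "real j \<le> L" "L < real j + 1" using L unfolding j_def by linarith+
      have "2 powr real j \<le> 2 powr L" using j1 by (intro powr_mono) auto
      also have "2 powr L = t / z x" using zx t unfolding L_def by simp
      finally have b: "z x \<le> t / 2^j" using zx by (simp add: powr_realpow field_simps)
      have "t / z x = 2 powr L" using zx t unfolding L_def by simp
      also have "\<dots> < 2 powr (real j + 1)" using j1 by (intro powr_less_mono) auto
      also have "2 powr (real j + 1) = 2^(j+1)" using powr_realpow[of 2 "Suc j"] by (simp add: add.commute)
      finally have a: "t / 2^(j+1) < z x" using zx by (simp add: field_simps)
      have "ennreal (if t < z x then 0 else z x powr p1) \<le> ennreal ((t / 2^j) powr p1) * indicator {x. t / 2^(j+1) < z x} x"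
        using False a b p1pos zx by (auto intro!: powr_mono2 ennreal_leI)
      also have "\<dots> \<le> (\<Sum>j. ennreal ((t / 2^j) powr p1) * indicator {x. t / 2^(j+1) < z x} x)"
        by (rule enn_le_suminf)
      finally show ?thesis .
    qed
  qed
  have sets: "\<And>c. {x. c < z x} \<in> sets lebesgue" using zm by (rule lset)
  have "(\<integral>\<^sup>+x. ennreal (if t < z x then 0 else z x powr p1) \<partial>lebesgue)
       \<le> (\<integral>\<^sup>+x. (\<Sum>j. ennreal ((t / 2^j) powr p1) * indicator {x. t / 2^(j+1) < z x} x) \<partial>lebesgue)"
    by (intro nn_integral_mono pt)
  also have "\<dots> = (\<Sum>j. \<integral>\<^sup>+x. ennreal ((t / 2^j) powr p1) * indicator {x. t / 2^(j+1) < z x} x \<partial>lebesgue)"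
    using sets by (intro nn_integral_suminf) auto
  also have "\<dots> = (\<Sum>j. ennreal ((t / 2^j) powr p1) * emeasure lebesgue {x. t / 2^(j+1) < z x})"
    using sets by (simp add: nn_integral_cmult_indicator)
  also have "\<dots> \<le> (\<Sum>j. ennreal (K * r^j))"
  proof (rule suminf_le[OF _ summableI summableI])
    fix j :: nat
    have tj: "t / 2^(j+1) > 0" using t by simp
    have m: "emeasure lebesgue {x. t / 2^(j+1) < z x} \<le> ennreal (1 / \<Psi> (t / 2^(j+1)))"
      by (rule meas_bound[OF W[OF tj] pos[OF tj]])
    have psi: "\<Psi> t \<le> D * (2 powr q * 2 powr (real j * q)) * \<Psi> (t / 2^(j+1))"
    proof -
      have "\<Psi> t = \<Psi> (2^(j+1) * (t / 2^(j+1)))" by simp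
      also have "\<dots> \<le> D * (2^(j+1)) powr q * \<Psi> (t / 2^(j+1))" using t one_le_power[of "2::real" "j+1"] by (intro up) auto
      also have "(2^(j+1)) powr q = 2 powr q * 2 powr (real j * q)"
      proof -
        have "(2::real)^(j+1) = 2 powr (real j + 1)" using powr_realpow[of 2 "Suc j"] by (simp add: add.commute)
        then have "(2^(j+1)) powr q = 2 powr ((real j + 1) * q)" by (simp add: powr_powr)
        also have "\<dots> = 2 powr q * 2 powr (real j * q)" by (simp add: powr_add[symmetric] algebra_simps)
        finally show ?thesis .
      qed
      finally show ?thesis .
    qed
    have "(t / 2^j) powr p1 / \<Psi> (t / 2^(j+1)) \<le> K * r^j"
    proof -
      have e1: "(t / 2^j) powr p1 = t powr p1 / 2 powr (real j * p1)"
        using t by (simp add: powr_divide powr_realpow[symmetric] powr_powr)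
      have e2: "r^j = 2 powr (real j * (q - p1))" unfolding r_def by (simp add: powr_realpow[symmetric] powr_powr mult.commute)
      have pp: "\<Psi> t > 0" "\<Psi> (t / 2^(j+1)) > 0" using pos t tj by auto
      have "(t / 2^j) powr p1 / \<Psi> (t / 2^(j+1))
          = (t / 2^j) powr p1 * (D * (2 powr q * 2 powr (real j * q))) / (D * (2 powr q * 2 powr (real j * q)) * \<Psi> (t / 2^(j+1)))"
        using D_pos pp by simp
      also have "\<dots> \<le> (t / 2^j) powr p1 * (D * (2 powr q * 2 powr (real j * q))) / \<Psi> t"
        using psi pp D_pos by (intro divide_left_mono mult_nonneg_nonneg) auto
      also have "\<dots> = K * r^j"
        unfolding e1 e2 K_def using pp
        by (simp add: field_simps powr_diff[symmetric] right_diff_distrib powr_add[symmetric])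
      finally show ?thesis .
    qed
    then have "ennreal ((t / 2^j) powr p1) * ennreal (1 / \<Psi> (t / 2^(j+1))) \<le> ennreal (K * r^j)"
      using pos[OF tj] by (simp add: ennreal_mult[symmetric] ennreal_leI del: ennreal_mult)
    then show "ennreal ((t / 2^j) powr p1) * emeasure lebesgue {x. t / 2^(j+1) < z x} \<le> ennreal (K * r^j)"
      using m by (meson mult_left_mono order_trans zero_le)
  qed
  also have "\<dots> = ennreal (K / (1 - r))" using geom_enn[OF K r] .
  finally show ?thesis unfolding K_def r_def .
qed

lemma single_le_count: "f k \<le> (\<integral>\<^sup>+i. f i \<partial>count_space (UNIV::int set))"
proof -
  have "f k = (\<integral>\<^sup>+i. f i * indicator {k} i \<partial>count_space UNIV)" by simp
  also have "\<dots> \<le> (\<integral>\<^sup>+i. f i \<partial>count_space UNIV)"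
    by (intro nn_integral_mono) (auto simp: indicator_def)
  finally show ?thesis .
qed

lemma int_shift1: "(\<integral>\<^sup>+k. f (c - k) \<partial>count_space (UNIV::int set)) = (\<integral>\<^sup>+k. f k \<partial>count_space UNIV)"
proof -
  have "bij_betw (\<lambda>k. c - k) (UNIV::int set) UNIV"
    by (rule bij_betwI[where g="\<lambda>k. c - k"]) auto
  then show ?thesis by (rule nn_integral_bij_count_space)
qed

lemma int_shift2: "(\<integral>\<^sup>+k. f (k - c) \<partial>count_space (UNIV::int set)) = (\<integral>\<^sup>+k. f k \<partial>count_space UNIV)"
proof -
  have "bij_betw (\<lambda>k. k - c) (UNIV::int set) UNIV"
    by (rule bij_betwI[where g="\<lambda>k. k + c"]) auto
  then show ?thesis by (rule nn_integral_bij_count_space)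
qed

definition gk :: "real \<Rightarrow> int \<Rightarrow> real" where
  "gk r i = (if 0 \<le> i then r ^ nat i else 0)"

lemma gk_nonneg: "0 \<le> r \<Longrightarrow> 0 \<le> gk r i"
  by (simp add: gk_def)

lemma int_geom:
  assumes "0 \<le> r" "r < 1"
  shows "(\<integral>\<^sup>+k. ennreal (gk r k) \<partial>count_space (UNIV::int set)) = ennreal (1 / (1 - r))"
proof -
  have "(\<integral>\<^sup>+k. ennreal (gk r k) \<partial>count_space (UNIV::int set))
      = (\<integral>\<^sup>+k. ennreal (r ^ nat k) * indicator {0..} k \<partial>count_space UNIV)"
    by (intro nn_integral_cong) (auto simp: gk_def indicator_def)
  also have "\<dots> = (\<integral>\<^sup>+k. ennreal (r ^ nat k) \<partial>count_space {0..})"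
    by (simp add: nn_integral_count_space_indicator)
  also have "\<dots> = (\<integral>\<^sup>+n. ennreal (r ^ nat (int n)) \<partial>count_space UNIV)"
  proof -
    have "bij_betw int UNIV {0::int..}"
      by (rule bij_betwI[where g=nat]) auto
    then show ?thesis by (rule nn_integral_bij_count_space[symmetric])
  qed
  also have "\<dots> = (\<integral>\<^sup>+n. ennreal (r ^ n) \<partial>count_space UNIV)"
    by (simp only: nat_int)
  also have "\<dots> = (\<Sum>n. ennreal (r ^ n))"
    by (rule nn_integral_count_space_nat)
  also have "\<dots> = ennreal (1 / (1 - r))"
    by (rule suminf_ennreal_eq) (use assms in \<open>auto intro: geometric_sums\<close>)
  finally show ?thesis .
qed

lemma (in psi_fun) ineq0:
  assumes "0 < w" "w \<le> z" "0 < p0" "p0 \<le> p"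
  shows "\<Psi> w * z powr p0 \<le> w powr p0 * (w / z) powr (p - p0) * \<Psi> z"
proof -
  have z: "z > 0" using assms by auto
  have "\<Psi> w = \<Psi> ((w/z) * z)" using z by simp
  also have "\<dots> \<le> (w/z) powr p * \<Psi> z" using assms z by (intro lam) auto
  finally have 1: "\<Psi> w * z powr p0 \<le> (w/z) powr p * \<Psi> z * z powr p0"
    by (intro mult_right_mono) auto
  have e: "(w/z) powr p * z powr p0 = w powr p0 * (w / z) powr (p - p0)"
    using z assms by (simp add: powr_diff powr_divide field_simps)
  have "(w/z) powr p * \<Psi> z * z powr p0 = ((w/z) powr p * z powr p0) * \<Psi> z"
    by (simp only: mult_ac)
  also have "\<dots> = w powr p0 * (w / z) powr (p - p0) * \<Psi> z" by (simp only: e)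
  finally have "(w/z) powr p * \<Psi> z * z powr p0 = w powr p0 * (w / z) powr (p - p0) * \<Psi> z" .
  then show ?thesis using 1 by linarith
qed

lemma (in psi_fun) ineq1:
  assumes "0 < z" "z \<le> w" "q \<le> p1"
  shows "\<Psi> w * z powr p1 \<le> D * w powr p1 * (z / w) powr (p1 - q) * \<Psi> z"
proof -
  have w: "w > 0" using assms by auto
  have "\<Psi> w = \<Psi> ((w/z) * z)" using assms by simp
  also have "\<dots> \<le> D * (w/z) powr q * \<Psi> z" using assms by (intro up) auto
  finally have 1: "\<Psi> w * z powr p1 \<le> D * (w/z) powr q * \<Psi> z * z powr p1"
    by (intro mult_right_mono) auto
  have e: "(w/z) powr q * z powr p1 = w powr p1 * (z / w) powr (p1 - q)"
    using w assms by (simp add: powr_diff powr_divide field_simps)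
  have "D * (w/z) powr q * \<Psi> z * z powr p1 = D * ((w/z) powr q * z powr p1) * \<Psi> z"
    by (simp only: mult_ac)
  also have "\<dots> = D * (w powr p1 * (z / w) powr (p1 - q)) * \<Psi> z" by (simp only: e)
  finally have "D * (w/z) powr q * \<Psi> z * z powr p1 = D * w powr p1 * (z / w) powr (p1 - q) * \<Psi> z"
    by (simp only: mult_ac)
  then show ?thesis using 1 by linarith
qed

lemma (in psi_fun) strong_fin0:
  fixes z :: "'a::euclidean_space \<Rightarrow> real"
  assumes "t > 0" "0 < p0" "p0 \<le> p" "\<And>x. z x \<ge> 0"
  shows "(\<integral>\<^sup>+x. ennreal (if t < z x then z x powr p0 else 0) \<partial>lebesgue)
        \<le> (\<integral>\<^sup>+x. ennreal (t powr p0 / \<Psi> t * \<Psi> (z x)) \<partial>lebesgue)"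
proof (intro nn_integral_mono ennreal_leI)
  fix x
  show "(if t < z x then z x powr p0 else 0) \<le> t powr p0 / \<Psi> t * \<Psi> (z x)"
  proof (cases "t < z x")
    case True
    have "\<Psi> t * z x powr p0 \<le> t powr p0 * (t / z x) powr (p - p0) * \<Psi> (z x)"
      using True assms by (intro ineq0) auto
    also have "\<dots> \<le> t powr p0 * 1 * \<Psi> (z x)"
    proof (intro mult_right_mono mult_left_mono)
      show "(t / z x) powr (p - p0) \<le> 1" using True assms by (intro powr_le1) auto
    qed (use True assms nonneg[of "z x"] in auto)
    finally have "\<Psi> t * z x powr p0 \<le> t powr p0 * \<Psi> (z x)" by simp
    then show ?thesis using True pos[OF assms(1)] by (simp add: pos_le_divide_eq mult.commute)
  next
    case False
    then show ?thesis using assms(1) assms(4)[of x] pos[of t] nonneg[of "z x"] by auto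
  qed
qed

lemma pow2_int: "(2 powr a) ^ n = 2 powr (a * real n)"
  using powr_power[of "2::real" a n] by (simp add: mult.commute)

lemma (in psi_fun) gbound0:
  fixes k m :: int
  assumes "0 < y" "2 powr (of_int m - 1) < y" "y \<le> 2 powr of_int m" "2 powr of_int k < y"
    and "A \<ge> 0" "0 < p0" "p0 < p"
  shows "\<Psi> (2 powr of_int k) * (A / (2 powr of_int k) powr p0) * y powr p0
          \<le> \<Psi> y * A * gk (2 powr (p0 - p)) (m - 1 - k)"
proof -
  define w where "w = 2 powr (of_int k :: real)"
  have w: "w > 0" unfolding w_def by simp
  have "2 powr of_int k < 2 powr (of_int m :: real)" using assms by linarith
  then have km: "k < m" by simp
  have g: "gk (2 powr (p0 - p)) (m - 1 - k) = 2 powr ((p - p0) * (of_int k - of_int m + 1))"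
    using km by (simp add: gk_def pow2_int algebra_simps)
  have i0: "\<Psi> w * y powr p0 \<le> w powr p0 * (w / y) powr (p - p0) * \<Psi> y"
    using assms w unfolding w_def by (intro ineq0) auto
  have "w / y \<le> w / 2 powr (of_int m - 1)"
    using assms w by (intro divide_left_mono) auto
  also have "\<dots> = 2 powr (of_int k - of_int m + 1)"
    unfolding w_def by (simp add: powr_diff[symmetric] algebra_simps)
  finally have "(w / y) powr (p - p0) \<le> (2 powr (of_int k - of_int m + 1)) powr (p - p0)"
    using assms w by (intro powr_mono2) auto
  also have "\<dots> = 2 powr ((p - p0) * (of_int k - of_int m + 1))"
    by (simp add: powr_powr mult.commute)
  finally have wy: "(w / y) powr (p - p0) \<le> gk (2 powr (p0 - p)) (m - 1 - k)" using g by simp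
  have "\<Psi> w * (A / w powr p0) * y powr p0 = A * (\<Psi> w * y powr p0) / w powr p0"
    by simp
  also have "\<dots> \<le> A * (w powr p0 * (w / y) powr (p - p0) * \<Psi> y) / w powr p0"
    using i0 assms w by (intro divide_right_mono mult_left_mono) auto
  also have "\<dots> = A * (w / y) powr (p - p0) * \<Psi> y" using w by simp
  also have "\<dots> \<le> A * gk (2 powr (p0 - p)) (m - 1 - k) * \<Psi> y"
    using wy assms nonneg[of y] by (intro mult_right_mono mult_left_mono) auto
  finally show ?thesis unfolding w_def by (simp add: algebra_simps)
qed

lemma (in psi_fun) gbound1:
  fixes k m :: int
  assumes "0 < y" "2 powr (of_int m - 1) < y" "y \<le> 2 powr of_int m" "y \<le> 2 powr of_int k"
    and "B \<ge> 0" "q < p1"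
  shows "\<Psi> (2 powr of_int k) * (B / (2 powr of_int k) powr p1) * y powr p1
          \<le> \<Psi> y * B * D * gk (2 powr (q - p1)) (k - m)"
proof -
  define w where "w = 2 powr (of_int k :: real)"
  have w: "w > 0" unfolding w_def by simp
  have "2 powr (of_int m - 1) < 2 powr (of_int k :: real)" using assms by linarith
  then have km: "m - 1 < k" by simp
  have g: "gk (2 powr (q - p1)) (k - m) = 2 powr ((p1 - q) * (of_int m - of_int k))"
    using km by (simp add: gk_def pow2_int algebra_simps)
  have i1: "\<Psi> w * y powr p1 \<le> D * w powr p1 * (y / w) powr (p1 - q) * \<Psi> y"
    using assms w unfolding w_def by (intro ineq1) auto
  have "y / w \<le> 2 powr of_int m / w"
    using assms w by (intro divide_right_mono) auto
  also have "\<dots> = 2 powr (of_int m - of_int k)"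
    unfolding w_def by (simp add: powr_diff[symmetric])
  finally have "(y / w) powr (p1 - q) \<le> (2 powr (of_int m - of_int k)) powr (p1 - q)"
    using assms w by (intro powr_mono2) auto
  also have "\<dots> = 2 powr ((p1 - q) * (of_int m - of_int k))"
    by (simp add: powr_powr mult.commute)
  finally have wy: "(y / w) powr (p1 - q) \<le> gk (2 powr (q - p1)) (k - m)" using g by simp
  have "\<Psi> w * (B / w powr p1) * y powr p1 = B * (\<Psi> w * y powr p1) / w powr p1"
    by simp
  also have "\<dots> \<le> B * (D * w powr p1 * (y / w) powr (p1 - q) * \<Psi> y) / w powr p1"
    using i1 assms w by (intro divide_right_mono mult_left_mono) auto
  also have "\<dots> = B * D * (y / w) powr (p1 - q) * \<Psi> y" using w by simp
  also have "\<dots> \<le> B * D * gk (2 powr (q - p1)) (k - m) * \<Psi> y"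
    using wy assms nonneg[of y] D_pos by (intro mult_right_mono mult_left_mono) auto
  finally show ?thesis unfolding w_def by (simp add: algebra_simps)
qed

lemma meas_ind:
  assumes [measurable]: "S \<in> sets M"
  shows "(\<lambda>x. (c::ennreal) * indicator S x) \<in> borel_measurable M"
  by measurable

lemma meas_if0:
  fixes z :: "'a \<Rightarrow> real"
  assumes [measurable]: "z \<in> borel_measurable M"
  shows "(\<lambda>x. (c::ennreal) * ennreal (if t < z x then z x powr r else 0)) \<in> borel_measurable M"
  by measurable

lemma meas_if1:
  fixes z :: "'a \<Rightarrow> real"
  assumes [measurable]: "z \<in> borel_measurable M"
  shows "(\<lambda>x. (c::ennreal) * ennreal (if t < z x then 0 else z x powr r)) \<in> borel_measurable M"
  by measurable

lemma (in psi_fun) meas_psi: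
  fixes z :: "'a \<Rightarrow> real"
  assumes zm: "z \<in> borel_measurable M" and zn: "\<And>x. z x \<ge> 0"
  shows "(\<lambda>x. ennreal (\<Psi> (z x))) \<in> borel_measurable M"
proof -
  have "mono (\<lambda>y. \<Psi> (max 0 y))" by (auto simp: mono_def intro!: mono)
  then have [measurable]: "(\<lambda>y. \<Psi> (max 0 y)) \<in> borel_measurable borel" by (rule borel_measurable_mono)
  note [measurable] = zm
  have "(\<lambda>x. ennreal (\<Psi> (max 0 (z x)))) \<in> borel_measurable M" by measurable
  also have "(\<lambda>x. ennreal (\<Psi> (max 0 (z x)))) = (\<lambda>x. ennreal (\<Psi> (z x)))"
    using zn by (simp add: max_absorb2)
  finally show ?thesis .
qed

lemma (in psi_fun) step1:
  assumes "v \<ge> 0"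
  shows "ennreal (\<Psi> (v / 4)) \<le> (\<integral>\<^sup>+k. ennreal (\<Psi> (2 powr of_int k)) * indicator {x. 2 * 2 powr of_int k < x} v \<partial>count_space (UNIV::int set))"
proof (cases "v = 0")
  case True then show ?thesis by (simp add: zero)
next
  case False
  then have v: "v > 0" using assms by auto
  define L where "L = log 2 v"
  define k where "k = \<lceil>L\<rceil> - 2"
  have "2 * 2 powr (of_int k) = (2::real) powr (of_int k + 1)" by (simp add: powr_add)
  also have "\<dots> < 2 powr L" unfolding k_def by (intro powr_less_mono) linarith+
  also have "2 powr L = v" unfolding L_def using v by simp
  finally have a: "2 * 2 powr (of_int k) < v" .
  have "v / 4 = 2 powr (L - 2)" unfolding L_def using v by (simp add: powr_diff)
  also have "\<dots> \<le> 2 powr of_int k" unfolding k_def by (intro powr_mono) linarith+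
  finally have b: "v / 4 \<le> 2 powr of_int k" .
  have "ennreal (\<Psi> (v / 4)) \<le> ennreal (\<Psi> (2 powr of_int k)) * indicator {x. 2 * 2 powr of_int k < x} v"
    using a b v by (auto intro!: ennreal_leI mono)
  also have "\<dots> \<le> (\<integral>\<^sup>+k. ennreal (\<Psi> (2 powr of_int k)) * indicator {x. 2 * 2 powr of_int k < x} v \<partial>count_space (UNIV::int set))"
    by (rule single_le_count[where f="\<lambda>k. ennreal (\<Psi> (2 powr of_int k)) * indicator {x. 2 * 2 powr of_int k < x} v"])
  finally show ?thesis .
qed

lemma (in psi_fun) step6:
  assumes "y \<ge> 0" "A \<ge> 0" "B \<ge> 0" "0 < p0" "p0 < p" "q < p1"
  shows "(\<integral>\<^sup>+k. ennreal (\<Psi> (2 powr of_int k) * (A / (2 powr of_int k) powr p0)) * ennreal (if 2 powr of_int k < y then y powr p0 else 0)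
           + ennreal (\<Psi> (2 powr of_int k) * (B / (2 powr of_int k) powr p1)) * ennreal (if 2 powr of_int k < y then 0 else y powr p1) \<partial>count_space (UNIV::int set))
        \<le> ennreal ((A / (1 - 2 powr (p0 - p)) + B * D / (1 - 2 powr (q - p1))) * \<Psi> y)"
proof (cases "y = 0")
  case True
  then have "\<And>k. \<not> 2 powr (of_int k :: real) < y" by (simp add: not_less)
  then show ?thesis using True assms by simp
next
  case False
  then have y: "y > 0" using assms by auto
  define r1 where "r1 = 2 powr (p0 - p)"
  define r2 where "r2 = 2 powr (q - p1)"
  have r1: "0 \<le> r1" "r1 < 1" using assms powr_less_mono[of "p0 - p" 0 2] unfolding r1_def by auto
  have r2: "0 \<le> r2" "r2 < 1" using assms powr_less_mono[of "q - p1" 0 2] unfolding r2_def by auto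
  define L where "L = log 2 y"
  define m where "m = \<lceil>L\<rceil>"
  have "2 powr (of_int m - 1) < 2 powr L" unfolding m_def by (intro powr_less_mono) linarith+
  then have m1: "2 powr (of_int m - 1) < y" unfolding L_def using y by simp
  have "2 powr L \<le> 2 powr of_int m" unfolding m_def by (intro powr_mono) linarith+
  then have m2: "y \<le> 2 powr of_int m" unfolding L_def using y by simp
  define c1 where "c1 = \<Psi> y * A"
  define c2 where "c2 = \<Psi> y * B * D"
  have c: "c1 \<ge> 0" "c2 \<ge> 0" using assms nonneg[of y] D_pos unfolding c1_def c2_def by auto
  have pw: "ennreal (\<Psi> (2 powr of_int k) * (A / (2 powr of_int k) powr p0)) * ennreal (if 2 powr of_int k < y then y powr p0 else 0)
           + ennreal (\<Psi> (2 powr of_int k) * (B / (2 powr of_int k) powr p1)) * ennreal (if 2 powr of_int k < y then 0 else y powr p1)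
        \<le> ennreal c1 * ennreal (gk r1 (m - 1 - k)) + ennreal c2 * ennreal (gk r2 (k - m))" for k
  proof -
    have pk: "\<Psi> (2 powr of_int k) \<ge> 0" by (intro nonneg) simp
    show ?thesis
    proof (cases "2 powr of_int k < y")
      case True
      have "\<Psi> (2 powr of_int k) * (A / (2 powr of_int k) powr p0) * y powr p0 \<le> c1 * gk r1 (m - 1 - k)"
        using gbound0[OF y m1 m2 True assms(2,4,5)] unfolding c1_def r1_def .
      then have "ennreal (\<Psi> (2 powr of_int k) * (A / (2 powr of_int k) powr p0)) * ennreal (y powr p0) \<le> ennreal c1 * ennreal (gk r1 (m - 1 - k))"
        using pk assms c r1 by (simp add: ennreal_mult[symmetric] gk_nonneg ennreal_leI del: ennreal_mult)
      then show ?thesis using True by (simp add: add_increasing2)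
    next
      case False
      then have F: "y \<le> 2 powr of_int k" by simp
      have "\<Psi> (2 powr of_int k) * (B / (2 powr of_int k) powr p1) * y powr p1 \<le> c2 * gk r2 (k - m)"
        using gbound1[OF y m1 m2 F assms(3,6)] unfolding c2_def r2_def .
      then have "ennreal (\<Psi> (2 powr of_int k) * (B / (2 powr of_int k) powr p1)) * ennreal (y powr p1) \<le> ennreal c2 * ennreal (gk r2 (k - m))"
        using pk assms c r2 by (simp add: ennreal_mult[symmetric] gk_nonneg ennreal_leI del: ennreal_mult)
      then show ?thesis using False by (simp add: add_increasing)
    qed
  qed
  have "(\<integral>\<^sup>+k. ennreal (\<Psi> (2 powr of_int k) * (A / (2 powr of_int k) powr p0)) * ennreal (if 2 powr of_int k < y then y powr p0 else 0)
           + ennreal (\<Psi> (2 powr of_int k) * (B / (2 powr of_int k) powr p1)) * ennreal (if 2 powr of_int k < y then 0 else y powr p1) \<partial>count_space (UNIV::int set))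
      \<le> (\<integral>\<^sup>+k. ennreal c1 * ennreal (gk r1 (m - 1 - k)) + ennreal c2 * ennreal (gk r2 (k - m)) \<partial>count_space (UNIV::int set))"
    by (intro nn_integral_mono pw)
  also have "\<dots> = ennreal c1 * (\<integral>\<^sup>+k. ennreal (gk r1 (m - 1 - k)) \<partial>count_space UNIV)
                 + ennreal c2 * (\<integral>\<^sup>+k. ennreal (gk r2 (k - m)) \<partial>count_space UNIV)"
    by (simp add: nn_integral_add nn_integral_cmult)
  also have "(\<integral>\<^sup>+k. ennreal (gk r1 (m - 1 - k)) \<partial>count_space UNIV) = ennreal (1 / (1 - r1))"
    using int_shift1[of "\<lambda>i. ennreal (gk r1 i)" "m - 1"] int_geom[OF r1] by simp
  also have "(\<integral>\<^sup>+k. ennreal (gk r2 (k - m)) \<partial>count_space UNIV) = ennreal (1 / (1 - r2))"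
    using int_shift2[of "\<lambda>i. ennreal (gk r2 i)" m] int_geom[OF r2] by simp
  also have "ennreal c1 * ennreal (1 / (1 - r1)) + ennreal c2 * ennreal (1 / (1 - r2))
      = ennreal ((A / (1 - 2 powr (p0 - p)) + B * D / (1 - 2 powr (q - p1))) * \<Psi> y)"
  proof -
    have "ennreal c1 * ennreal (1 / (1 - r1)) + ennreal c2 * ennreal (1 / (1 - r2))
        = ennreal (c1 * (1 / (1 - r1)) + c2 * (1 / (1 - r2)))"
      using c r1 r2 by (simp add: ennreal_mult[symmetric] ennreal_plus[symmetric] del: ennreal_mult ennreal_plus)
    also have "c1 * (1 / (1 - r1)) + c2 * (1 / (1 - r2)) = (A / (1 - 2 powr (p0 - p)) + B * D / (1 - 2 powr (q - p1))) * \<Psi> y"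
      unfolding c1_def c2_def r1_def r2_def by (simp add: field_simps)
    finally show ?thesis .
  qed
  finally show ?thesis .
qed

lemma (in psi_fun) strong:
  fixes z v :: "'a::euclidean_space \<Rightarrow> real"
  assumes zm: "z \<in> borel_measurable lebesgue" and vm: "v \<in> borel_measurable lebesgue"
    and zn: "\<And>x. z x \<ge> 0" and vn: "\<And>x. v x \<ge> 0"
    and AB: "A \<ge> 0" "B \<ge> 0" and p0: "0 < p0" "p0 < p" and p1: "q < p1"
    and E: "\<And>t. t > 0 \<Longrightarrow> emeasure lebesgue {x. 2 * t < v x}
       \<le> ennreal (A / t powr p0) * (\<integral>\<^sup>+x. ennreal (if t < z x then z x powr p0 else 0) \<partial>lebesgue)
         + ennreal (B / t powr p1) * (\<integral>\<^sup>+x. ennreal (if t < z x then 0 else z x powr p1) \<partial>lebesgue)"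
  shows "(\<integral>\<^sup>+x. ennreal (\<Psi> (v x / 4)) \<partial>lebesgue)
     \<le> ennreal (A / (1 - 2 powr (p0 - p)) + B * D / (1 - 2 powr (q - p1))) * (\<integral>\<^sup>+x. ennreal (\<Psi> (z x)) \<partial>lebesgue)"
proof -
  define w :: "int \<Rightarrow> real" where "w k = 2 powr of_int k" for k
  have wpos: "w k > 0" for k unfolding w_def by simp
  define Kc where "Kc = A / (1 - 2 powr (p0 - p)) + B * D / (1 - 2 powr (q - p1))"
  have Kc: "Kc \<ge> 0"
  proof -
    have "2 powr (p0 - p) < 1" "2 powr (q - p1) < (1::real)"
      using p0 p1 powr_less_mono[of "p0 - p" 0 2] powr_less_mono[of "q - p1" 0 2] by auto
    then show ?thesis unfolding Kc_def using AB D_pos by auto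
  qed
  have sets: "\<And>c. {x. c < v x} \<in> sets lebesgue" using vm by (rule lset)
  define F where "F k x = ennreal (\<Psi> (w k)) * indicator {x. 2 * w k < v x} x" for k x
  define G where "G k x = ennreal (\<Psi> (w k) * (A / (w k) powr p0)) * ennreal (if w k < z x then z x powr p0 else 0)
           + ennreal (\<Psi> (w k) * (B / (w k) powr p1)) * ennreal (if w k < z x then 0 else z x powr p1)" for k x
  have Fm: "F k \<in> borel_measurable lebesgue" for k
    unfolding F_def by (rule meas_ind[OF sets])
  have Gm: "G k \<in> borel_measurable lebesgue" for k
    unfolding G_def using meas_if0[OF zm] meas_if1[OF zm] by (intro borel_measurable_add) auto
  have "(\<integral>\<^sup>+x. ennreal (\<Psi> (v x / 4)) \<partial>lebesgue) \<le> (\<integral>\<^sup>+x. \<integral>\<^sup>+k. F k x \<partial>count_space UNIV \<partial>lebesgue)"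
  proof (intro nn_integral_mono)
    fix x
    have "F k x = ennreal (\<Psi> (2 powr of_int k)) * indicator {y. 2 * 2 powr of_int k < y} (v x)" for k
      unfolding F_def w_def by (simp add: indicator_def)
    then show "ennreal (\<Psi> (v x / 4)) \<le> (\<integral>\<^sup>+k. F k x \<partial>count_space UNIV)"
      using step1[OF vn[of x]] by simp
  qed
  also have "\<dots> = (\<integral>\<^sup>+k. \<integral>\<^sup>+x. F k x \<partial>lebesgue \<partial>count_space UNIV)"
    by (rule nn_integral_count_space_nn_integral) (auto intro: Fm)
  also have "\<dots> = (\<integral>\<^sup>+k. ennreal (\<Psi> (w k)) * emeasure lebesgue {x. 2 * w k < v x} \<partial>count_space UNIV)"
    unfolding F_def using sets by (simp add: nn_integral_cmult_indicator)
  also have "\<dots> \<le> (\<integral>\<^sup>+k. \<integral>\<^sup>+x. G k x \<partial>lebesgue \<partial>count_space UNIV)"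
  proof (intro nn_integral_mono)
    fix k
    have pk: "\<Psi> (w k) \<ge> 0" using wpos by (intro nonneg) (simp add: less_imp_le)
    have a: "A / w k powr p0 \<ge> 0" "B / w k powr p1 \<ge> 0" using AB wpos by auto
    have "ennreal (\<Psi> (w k)) * emeasure lebesgue {x. 2 * w k < v x}
       \<le> ennreal (\<Psi> (w k)) * (ennreal (A / w k powr p0) * (\<integral>\<^sup>+x. ennreal (if w k < z x then z x powr p0 else 0) \<partial>lebesgue)
         + ennreal (B / w k powr p1) * (\<integral>\<^sup>+x. ennreal (if w k < z x then 0 else z x powr p1) \<partial>lebesgue))"
      using E[OF wpos] by (intro mult_left_mono) auto
    also have "\<dots> = ennreal (\<Psi> (w k) * (A / (w k) powr p0)) * (\<integral>\<^sup>+x. ennreal (if w k < z x then z x powr p0 else 0) \<partial>lebesgue)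
         + ennreal (\<Psi> (w k) * (B / (w k) powr p1)) * (\<integral>\<^sup>+x. ennreal (if w k < z x then 0 else z x powr p1) \<partial>lebesgue)"
    proof -
      have e1: "ennreal (\<Psi> (w k) * (A / w k powr p0)) = ennreal (\<Psi> (w k)) * ennreal (A / w k powr p0)"
        using pk a by (intro ennreal_mult) auto
      have e2: "ennreal (\<Psi> (w k) * (B / w k powr p1)) = ennreal (\<Psi> (w k)) * ennreal (B / w k powr p1)"
        using pk a by (intro ennreal_mult) auto
      show ?thesis by (simp only: e1 e2 distrib_left mult.assoc)
    qed
    also have "\<dots> = (\<integral>\<^sup>+x. G k x \<partial>lebesgue)"
      unfolding G_def using meas_if0[OF zm, of 1] meas_if1[OF zm, of 1]
      by (simp add: nn_integral_add nn_integral_cmult)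
    finally show "ennreal (\<Psi> (w k)) * emeasure lebesgue {x. 2 * w k < v x} \<le> (\<integral>\<^sup>+x. G k x \<partial>lebesgue)" .
  qed
  also have "\<dots> = (\<integral>\<^sup>+x. \<integral>\<^sup>+k. G k x \<partial>count_space UNIV \<partial>lebesgue)"
    by (rule nn_integral_count_space_nn_integral[symmetric]) (auto intro: Gm)
  also have "\<dots> \<le> (\<integral>\<^sup>+x. ennreal (Kc * \<Psi> (z x)) \<partial>lebesgue)"
  proof (intro nn_integral_mono)
    fix x
    show "(\<integral>\<^sup>+k. G k x \<partial>count_space UNIV) \<le> ennreal (Kc * \<Psi> (z x))"
      unfolding G_def w_def Kc_def by (rule step6[OF zn AB p0 p1])
  qed
  also have "\<dots> = ennreal Kc * (\<integral>\<^sup>+x. ennreal (\<Psi> (z x)) \<partial>lebesgue)"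
    using Kc nonneg zn meas_psi[OF zm zn] by (simp add: ennreal_mult nn_integral_cmult)
  finally show ?thesis unfolding Kc_def .
qed

lemma (in psi_fun) strong_fin1:
  fixes z :: "'a::euclidean_space \<Rightarrow> real"
  assumes "t > 0" "q \<le> p1" "\<And>x. z x \<ge> 0"
  shows "(\<integral>\<^sup>+x. ennreal (if t < z x then 0 else z x powr p1) \<partial>lebesgue)
        \<le> (\<integral>\<^sup>+x. ennreal (D * t powr p1 / \<Psi> t * \<Psi> (z x)) \<partial>lebesgue)"
proof (intro nn_integral_mono ennreal_leI)
  fix x
  have pt: "\<Psi> t > 0" using pos assms by auto
  show "(if t < z x then 0 else z x powr p1) \<le> D * t powr p1 / \<Psi> t * \<Psi> (z x)"
  proof (cases "t < z x \<or> z x = 0")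
    case True
    then show ?thesis using assms(3)[of x] pt nonneg[of "z x"] D_pos by auto
  next
    case False
    then have zx: "0 < z x" "z x \<le> t" using assms(3)[of x] by auto
    have "\<Psi> t * z x powr p1 \<le> D * t powr p1 * (z x / t) powr (p1 - q) * \<Psi> (z x)"
      using zx assms by (intro ineq1) auto
    also have "\<dots> \<le> D * t powr p1 * 1 * \<Psi> (z x)"
    proof (intro mult_right_mono mult_left_mono)
      show "(z x / t) powr (p1 - q) \<le> 1" using zx assms by (intro powr_le1) auto
    qed (use zx assms nonneg[of "z x"] D_pos in auto)
    finally have "\<Psi> t * z x powr p1 \<le> D * t powr p1 * \<Psi> (z x)" by simp
    then show ?thesis using False pt by (simp add: pos_le_divide_eq mult.commute mult.left_commute)
  qed
qed

lemma Lp_bound: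
  fixes T :: "('a::euclidean_space \<Rightarrow> complex) \<Rightarrow> ('a \<Rightarrow> complex)"
  assumes "is_multiplier_extension a T" "p > 1"
  shows "\<exists>C\<ge>0. \<forall>g. in_Lp p g \<longrightarrow> in_Lp p (T g) \<and>
     (\<integral>\<^sup>+x. ennreal (cmod (T g x) powr p) \<partial>lebesgue) \<le> ennreal (C powr p) * (\<integral>\<^sup>+x. ennreal (cmod (g x) powr p) \<partial>lebesgue)"
proof -
  obtain C where C: "\<And>f. in_Lp p f \<Longrightarrow> in_Lp p (T f) \<and> Lp_norm p (T f) \<le> C * Lp_norm p f"
    using assms unfolding is_multiplier_extension_def by blast
  define C' where "C' = max C 0"
  have "\<forall>g. in_Lp p g \<longrightarrow> in_Lp p (T g) \<and>
     (\<integral>\<^sup>+x. ennreal (cmod (T g x) powr p) \<partial>lebesgue) \<le> ennreal (C' powr p) * (\<integral>\<^sup>+x. ennreal (cmod (g x) powr p) \<partial>lebesgue)"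
  proof (intro allI impI conjI)
    fix g :: "'a \<Rightarrow> complex" assume g: "in_Lp p g"
    show Tg: "in_Lp p (T g)" using C[OF g] by simp
    define Ig where "Ig = (\<integral>\<^sup>+x. ennreal (cmod (g x) powr p) \<partial>lebesgue)"
    define It where "It = (\<integral>\<^sup>+x. ennreal (cmod (T g x) powr p) \<partial>lebesgue)"
    have fin: "Ig < \<infinity>" "It < \<infinity>" using g Tg unfolding in_Lp_def Ig_def It_def by auto
    have "Lp_norm p (T g) \<le> C * Lp_norm p g" using C[OF g] by simp
    also have "\<dots> \<le> C' * Lp_norm p g"
      unfolding C'_def Lp_norm_def by (intro mult_right_mono) auto
    finally have n: "enn2real It powr (1/p) \<le> C' * enn2real Ig powr (1/p)"
      unfolding Lp_norm_def It_def Ig_def .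
    have "enn2real It = (enn2real It powr (1/p)) powr p"
      using assms(2) by (simp add: powr_powr)
    also have "\<dots> \<le> (C' * enn2real Ig powr (1/p)) powr p"
      using n assms(2) by (intro powr_mono2) auto
    also have "\<dots> = C' powr p * enn2real Ig"
      using assms(2) unfolding C'_def by (simp add: powr_mult powr_powr)
    finally have r: "enn2real It \<le> C' powr p * enn2real Ig" .
    have "It = ennreal (enn2real It)" using fin by simp
    also have "\<dots> \<le> ennreal (C' powr p * enn2real Ig)" using r by (rule ennreal_leI)
    also have "\<dots> = ennreal (C' powr p) * Ig" using fin by (simp add: ennreal_mult)
    finally show "It \<le> ennreal (C' powr p) * Ig" .
  qed
  moreover have "C' \<ge> 0" unfolding C'_def by simp
  ultimately show ?thesis by blast
qed

lemma cheb:
  fixes g :: "'a::euclidean_space \<Rightarrow> complex"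
  assumes gm: "g \<in> borel_measurable lebesgue" and t: "t > 0" and p: "p > 0"
  shows "emeasure lebesgue {x. t < cmod (g x)} \<le> ennreal (1 / t powr p) * (\<integral>\<^sup>+x. ennreal (cmod (g x) powr p) \<partial>lebesgue)"
proof -
  note [measurable] = gm
  have S: "{x. t < cmod (g x)} \<in> sets lebesgue"
    by (rule lset) measurable
  have "emeasure lebesgue {x. t < cmod (g x)} = (\<integral>\<^sup>+x. indicator {x. t < cmod (g x)} x \<partial>lebesgue)"
    using S by simp
  also have "\<dots> \<le> (\<integral>\<^sup>+x. ennreal (1 / t powr p) * ennreal (cmod (g x) powr p) \<partial>lebesgue)"
  proof (intro nn_integral_mono)
    fix x
    show "indicator {x. t < cmod (g x)} x \<le> ennreal (1 / t powr p) * ennreal (cmod (g x) powr p)"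
    proof (cases "t < cmod (g x)")
      case True
      have "t powr p \<le> cmod (g x) powr p" using True t p by (intro powr_mono2) auto
      then have "1 \<le> 1 / t powr p * cmod (g x) powr p" using t by (simp add: field_simps)
      then have "ennreal 1 \<le> ennreal (1 / t powr p * cmod (g x) powr p)" by (rule ennreal_leI)
      then show ?thesis using True t by (simp add: ennreal_mult[symmetric] del: ennreal_mult)
    qed simp
  qed
  also have "\<dots> = ennreal (1 / t powr p) * (\<integral>\<^sup>+x. ennreal (cmod (g x) powr p) \<partial>lebesgue)"
    by (rule nn_integral_cmult) measurable
  finally show ?thesis .
qed

lemma Inf_scale:
  fixes S U :: "real set"
  assumes "S \<noteq> {}" "\<And>s. s \<in> S \<Longrightarrow> s > 0" "\<And>u. u \<in> U \<Longrightarrow> u > 0" "\<And>s. s \<in> S \<Longrightarrow> c * s \<in> U" "c > 0"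
  shows "Inf U \<le> c * Inf S" "Inf S \<ge> 0"
proof -
  have bU: "bdd_below U" using assms(3) by (intro bdd_belowI[of _ 0]) (auto intro: less_imp_le)
  have "Inf U / c \<le> s" if "s \<in> S" for s
  proof -
    have "Inf U \<le> c * s" using assms(4)[OF that] bU by (rule cInf_lower)
    then show ?thesis using assms(5) by (simp add: field_simps)
  qed
  then have "Inf U / c \<le> Inf S" using assms(1) by (intro cInf_greatest) auto
  then show "Inf U \<le> c * Inf S" using assms(5) by (simp add: field_simps)
  show "Inf S \<ge> 0" using assms(1,2) by (intro cInf_greatest) (auto intro: less_imp_le)
qed

lemma in_Lp_zero: "in_Lp p (\<lambda>_. 0)"
  unfolding in_Lp_def by simp

lemma dist_est:
  fixes T :: "('a::euclidean_space \<Rightarrow> complex) \<Rightarrow> ('a \<Rightarrow> complex)"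
  assumes Tlin: "is_multiplier_extension a T"
    and p01: "1 < p0" "p0 < p1"
    and T0: "\<And>g. in_Lp p0 g \<Longrightarrow> in_Lp p0 (T g) \<and>
     (\<integral>\<^sup>+x. ennreal (cmod (T g x) powr p0) \<partial>lebesgue) \<le> ennreal (C0 powr p0) * (\<integral>\<^sup>+x. ennreal (cmod (g x) powr p0) \<partial>lebesgue)"
    and T1: "\<And>g. in_Lp p1 g \<Longrightarrow> in_Lp p1 (T g) \<and>
     (\<integral>\<^sup>+x. ennreal (cmod (T g x) powr p1) \<partial>lebesgue) \<le> ennreal (C1 powr p1) * (\<integral>\<^sup>+x. ennreal (cmod (g x) powr p1) \<partial>lebesgue)"
    and fm: "f \<in> borel_measurable lebesgue" and t: "t > 0"
    and fin0: "(\<integral>\<^sup>+x. ennreal (if t < cmod (f x) then cmod (f x) powr p0 else 0) \<partial>lebesgue) < \<infinity>"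
    and fin1: "(\<integral>\<^sup>+x. ennreal (if t < cmod (f x) then 0 else cmod (f x) powr p1) \<partial>lebesgue) < \<infinity>"
  shows "T f \<in> borel_measurable lebesgue"
    "emeasure lebesgue {x. 2 * t < cmod (T f x)}
       \<le> ennreal (C0 powr p0 / t powr p0) * (\<integral>\<^sup>+x. ennreal (if t < cmod (f x) then cmod (f x) powr p0 else 0) \<partial>lebesgue)
         + ennreal (C1 powr p1 / t powr p1) * (\<integral>\<^sup>+x. ennreal (if t < cmod (f x) then 0 else cmod (f x) powr p1) \<partial>lebesgue)"
proof -
  note [measurable] = fm
  define f1 where "f1 x = (if t < cmod (f x) then f x else 0)" for x
  define f2 where "f2 x = (if t < cmod (f x) then 0 else f x)" for x
  have e1: "(\<lambda>x. ennreal (cmod (f1 x) powr p0)) = (\<lambda>x. ennreal (if t < cmod (f x) then cmod (f x) powr p0 else 0))"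
    unfolding f1_def by (auto simp: fun_eq_iff)
  have e2: "(\<lambda>x. ennreal (cmod (f2 x) powr p1)) = (\<lambda>x. ennreal (if t < cmod (f x) then 0 else cmod (f x) powr p1))"
    unfolding f2_def by (auto simp: fun_eq_iff)
  have m1: "f1 \<in> borel_measurable lebesgue" unfolding f1_def by measurable
  have m2: "f2 \<in> borel_measurable lebesgue" unfolding f2_def by measurable
  have L1: "in_Lp p0 f1" unfolding in_Lp_def using m1 fin0 e1 by simp
  have L2: "in_Lp p1 f2" unfolding in_Lp_def using m2 fin1 e2 by simp
  have S1: "f1 \<in> Lp_sum_space" unfolding Lp_sum_space_def
    using L1 in_Lp_zero[of p1] p01 by (intro CollectI exI[of _ f1] exI[of _ "\<lambda>_. 0"] exI[of _ p0] exI[of _ p1]) auto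
  have S2: "f2 \<in> Lp_sum_space" unfolding Lp_sum_space_def
    using L2 in_Lp_zero[of p0] p01 by (intro CollectI exI[of _ "\<lambda>_. 0"] exI[of _ f2] exI[of _ p0] exI[of _ p1]) auto
  have ff: "(\<lambda>y. f1 y + f2 y) = f" unfolding f1_def f2_def by auto
  have "AE x in lebesgue. T (\<lambda>y. f1 y + f2 y) x = T f1 x + T f2 x"
    using Tlin S1 S2 unfolding is_multiplier_extension_def by blast
  then have ae: "AE x in lebesgue. T f x = T f1 x + T f2 x" by (simp only: ff)
  have TL1: "in_Lp p0 (T f1)" and TB1: "(\<integral>\<^sup>+x. ennreal (cmod (T f1 x) powr p0) \<partial>lebesgue) \<le> ennreal (C0 powr p0) * (\<integral>\<^sup>+x. ennreal (cmod (f1 x) powr p0) \<partial>lebesgue)"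
    using T0[OF L1] by auto
  have TL2: "in_Lp p1 (T f2)" and TB2: "(\<integral>\<^sup>+x. ennreal (cmod (T f2 x) powr p1) \<partial>lebesgue) \<le> ennreal (C1 powr p1) * (\<integral>\<^sup>+x. ennreal (cmod (f2 x) powr p1) \<partial>lebesgue)"
    using T1[OF L2] by auto
  have Tm1[measurable]: "T f1 \<in> borel_measurable lebesgue" using TL1 unfolding in_Lp_def by simp
  have Tm2[measurable]: "T f2 \<in> borel_measurable lebesgue" using TL2 unfolding in_Lp_def by simp
  have "(\<lambda>x. T f1 x + T f2 x) \<in> borel_measurable lebesgue" by measurable
  moreover have "AE x in lebesgue. T f1 x + T f2 x = T f x" using ae by auto
  ultimately show Tfm: "T f \<in> borel_measurable lebesgue" by (rule borel_measurable_AE)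
  have s1: "{x. t < cmod (T f1 x)} \<in> sets lebesgue" by (rule lset) measurable
  have s2: "{x. t < cmod (T f2 x)} \<in> sets lebesgue" by (rule lset) measurable
  have "emeasure lebesgue {x. 2 * t < cmod (T f x)} \<le> emeasure lebesgue ({x. t < cmod (T f1 x)} \<union> {x. t < cmod (T f2 x)})"
  proof (rule emeasure_mono_AE)
    show "AE x in lebesgue. x \<in> {x. 2 * t < cmod (T f x)} \<longrightarrow> x \<in> {x. t < cmod (T f1 x)} \<union> {x. t < cmod (T f2 x)}"
      using ae
    proof eventually_elim
      case (elim x)
      have "cmod (T f x) \<le> cmod (T f1 x) + cmod (T f2 x)" using elim by (simp add: norm_triangle_ineq)
      then show ?case by auto
    qed
  qed (use s1 s2 in auto)
  also have "\<dots> \<le> emeasure lebesgue {x. t < cmod (T f1 x)} + emeasure lebesgue {x. t < cmod (T f2 x)}"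
    using s1 s2 by (rule emeasure_subadditive)
  also have "\<dots> \<le> ennreal (1 / t powr p0) * (ennreal (C0 powr p0) * (\<integral>\<^sup>+x. ennreal (cmod (f1 x) powr p0) \<partial>lebesgue))
                + ennreal (1 / t powr p1) * (ennreal (C1 powr p1) * (\<integral>\<^sup>+x. ennreal (cmod (f2 x) powr p1) \<partial>lebesgue))"
  proof (intro add_mono)
    show "emeasure lebesgue {x. t < cmod (T f1 x)} \<le> ennreal (1 / t powr p0) * (ennreal (C0 powr p0) * (\<integral>\<^sup>+x. ennreal (cmod (f1 x) powr p0) \<partial>lebesgue))"
      using cheb[OF Tm1 t, of p0] p01 TB1 by (meson less_trans mult_left_mono order_trans zero_le zero_less_one)
    show "emeasure lebesgue {x. t < cmod (T f2 x)} \<le> ennreal (1 / t powr p1) * (ennreal (C1 powr p1) * (\<integral>\<^sup>+x. ennreal (cmod (f2 x) powr p1) \<partial>lebesgue))"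
      using cheb[OF Tm2 t, of p1] p01 TB2 by (meson less_trans mult_left_mono order_trans zero_le zero_less_one)
  qed
  also have "\<dots> = ennreal (C0 powr p0 / t powr p0) * (\<integral>\<^sup>+x. ennreal (if t < cmod (f x) then cmod (f x) powr p0 else 0) \<partial>lebesgue)
         + ennreal (C1 powr p1 / t powr p1) * (\<integral>\<^sup>+x. ennreal (if t < cmod (f x) then 0 else cmod (f x) powr p1) \<partial>lebesgue)"
  proof -
    have a: "ennreal (1 / t powr p0) * ennreal (C0 powr p0) = ennreal (C0 powr p0 / t powr p0)"
      using t by (simp add: ennreal_mult[symmetric] del: ennreal_mult)
    have b: "ennreal (1 / t powr p1) * ennreal (C1 powr p1) = ennreal (C1 powr p1 / t powr p1)"
      using t by (simp add: ennreal_mult[symmetric] del: ennreal_mult)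
    show ?thesis unfolding e1 e2 by (simp only: mult.assoc[symmetric] a b)
  qed
  finally show "emeasure lebesgue {x. 2 * t < cmod (T f x)}
       \<le> ennreal (C0 powr p0 / t powr p0) * (\<integral>\<^sup>+x. ennreal (if t < cmod (f x) then cmod (f x) powr p0 else 0) \<partial>lebesgue)
         + ennreal (C1 powr p1 / t powr p1) * (\<integral>\<^sup>+x. ennreal (if t < cmod (f x) then 0 else cmod (f x) powr p1) \<partial>lebesgue)" .
qed

lemma (in psi_fun) strong_key:
  fixes T :: "('a::euclidean_space \<Rightarrow> complex) \<Rightarrow> ('a \<Rightarrow> complex)"
  assumes Tlin: "is_multiplier_extension a T"
    and p01: "1 < p0" "p0 < p" "q < p1" "p0 < p1" and C01: "C0 \<ge> 0" "C1 \<ge> 0"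
    and T0: "\<And>g. in_Lp p0 g \<Longrightarrow> in_Lp p0 (T g) \<and>
     (\<integral>\<^sup>+x. ennreal (cmod (T g x) powr p0) \<partial>lebesgue) \<le> ennreal (C0 powr p0) * (\<integral>\<^sup>+x. ennreal (cmod (g x) powr p0) \<partial>lebesgue)"
    and T1: "\<And>g. in_Lp p1 g \<Longrightarrow> in_Lp p1 (T g) \<and>
     (\<integral>\<^sup>+x. ennreal (cmod (T g x) powr p1) \<partial>lebesgue) \<le> ennreal (C1 powr p1) * (\<integral>\<^sup>+x. ennreal (cmod (g x) powr p1) \<partial>lebesgue)"
    and fm: "f \<in> borel_measurable lebesgue"
    and I: "(\<integral>\<^sup>+x. ennreal (\<Psi> (cmod (f x))) \<partial>lebesgue) \<le> 1"
  shows "T f \<in> borel_measurable lebesgue"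
    "(\<integral>\<^sup>+x. ennreal (\<Psi> (cmod (T f x) / 4)) \<partial>lebesgue)
      \<le> ennreal (C0 powr p0 / (1 - 2 powr (p0 - p)) + C1 powr p1 * D / (1 - 2 powr (q - p1)))"
proof -
  note [measurable] = fm
  have zm: "(\<lambda>x. cmod (f x)) \<in> borel_measurable lebesgue" by measurable
  have mp: "(\<lambda>x. ennreal (\<Psi> (cmod (f x)))) \<in> borel_measurable lebesgue"
    by (rule meas_psi[OF zm]) auto
  have fin: "(\<integral>\<^sup>+x. ennreal (c * \<Psi> (cmod (f x))) \<partial>lebesgue) < \<infinity>" if "c \<ge> 0" for c
  proof -
    have "(\<integral>\<^sup>+x. ennreal (c * \<Psi> (cmod (f x))) \<partial>lebesgue) = ennreal c * (\<integral>\<^sup>+x. ennreal (\<Psi> (cmod (f x))) \<partial>lebesgue)"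
      using that nonneg mp by (simp add: ennreal_mult nn_integral_cmult)
    also have "\<dots> \<le> ennreal c * 1" using I by (intro mult_left_mono) auto
    finally show ?thesis by (simp add: order_le_less_trans)
  qed
  have fin0: "(\<integral>\<^sup>+x. ennreal (if t < cmod (f x) then cmod (f x) powr p0 else 0) \<partial>lebesgue) < \<infinity>" if t: "t > 0" for t
    using strong_fin0[of t p0 "\<lambda>x. cmod (f x)"] t p01 fin[of "t powr p0 / \<Psi> t"] pos[OF t]
    by (simp add: order_le_less_trans)
  have fin1: "(\<integral>\<^sup>+x. ennreal (if t < cmod (f x) then 0 else cmod (f x) powr p1) \<partial>lebesgue) < \<infinity>" if t: "t > 0" for t
    using strong_fin1[of t p1 "\<lambda>x. cmod (f x)"] t p01 fin[of "D * t powr p1 / \<Psi> t"] pos[OF t] D_pos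
    by (simp add: order_le_less_trans)
  note d = dist_est[OF Tlin _ _ T0 T1 fm _ fin0 fin1]
  show Tm: "T f \<in> borel_measurable lebesgue" using d(1)[of 1] p01 by auto
  have vm: "(\<lambda>x. cmod (T f x)) \<in> borel_measurable lebesgue" using Tm by measurable
  have "(\<integral>\<^sup>+x. ennreal (\<Psi> (cmod (T f x) / 4)) \<partial>lebesgue)
      \<le> ennreal (C0 powr p0 / (1 - 2 powr (p0 - p)) + C1 powr p1 * D / (1 - 2 powr (q - p1))) * (\<integral>\<^sup>+x. ennreal (\<Psi> (cmod (f x))) \<partial>lebesgue)"
    by (rule strong[OF zm vm _ _ _ _ _ p01(2) p01(3)]) (use d(2) p01 C01 in auto)
  also have "\<dots> \<le> ennreal (C0 powr p0 / (1 - 2 powr (p0 - p)) + C1 powr p1 * D / (1 - 2 powr (q - p1))) * 1"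
    using I by (intro mult_left_mono) auto
  finally show "(\<integral>\<^sup>+x. ennreal (\<Psi> (cmod (T f x) / 4)) \<partial>lebesgue)
      \<le> ennreal (C0 powr p0 / (1 - 2 powr (p0 - p)) + C1 powr p1 * D / (1 - 2 powr (q - p1)))" by simp
qed

lemma alg_aux: "(P::real) > 0 \<Longrightarrow> T > 0 \<Longrightarrow> d > 0 \<Longrightarrow> P * (c / T * ((a * T / P) / d)) = c * a / d"
  by (simp add: field_simps)

lemma (in psi_fun) weak_key:
  fixes T :: "('a::euclidean_space \<Rightarrow> complex) \<Rightarrow> ('a \<Rightarrow> complex)"
  assumes Tlin: "is_multiplier_extension a T"
    and p01: "1 < p0" "p0 < p" "q < p1" "p0 < p1" and C01: "C0 \<ge> 0" "C1 \<ge> 0"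
    and T0: "\<And>g. in_Lp p0 g \<Longrightarrow> in_Lp p0 (T g) \<and>
     (\<integral>\<^sup>+x. ennreal (cmod (T g x) powr p0) \<partial>lebesgue) \<le> ennreal (C0 powr p0) * (\<integral>\<^sup>+x. ennreal (cmod (g x) powr p0) \<partial>lebesgue)"
    and T1: "\<And>g. in_Lp p1 g \<Longrightarrow> in_Lp p1 (T g) \<and>
     (\<integral>\<^sup>+x. ennreal (cmod (T g x) powr p1) \<partial>lebesgue) \<le> ennreal (C1 powr p1) * (\<integral>\<^sup>+x. ennreal (cmod (g x) powr p1) \<partial>lebesgue)"
    and fm: "f \<in> borel_measurable lebesgue"
    and W: "\<And>t. t > 0 \<Longrightarrow> ennreal (\<Psi> t) * emeasure lebesgue {x. t < cmod (f x)} \<le> 1"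
  shows "T f \<in> borel_measurable lebesgue"
    "\<And>t. t > 0 \<Longrightarrow> ennreal (\<Psi> t) * emeasure lebesgue {x. 2 * t < cmod (T f x)}
      \<le> ennreal (C0 powr p0 * 2 powr p0 / (1 - 2 powr (p0 - p)) + C1 powr p1 * (D * 2 powr q) / (1 - 2 powr (q - p1)))"
proof -
  note [measurable] = fm
  have zm: "(\<lambda>x. cmod (f x)) \<in> borel_measurable lebesgue" by measurable
  have r: "2 powr (p0 - p) < 1" "2 powr (q - p1) < (1::real)"
    using p01 powr_less_mono[of "p0 - p" 0 2] powr_less_mono[of "q - p1" 0 2] by auto
  define X0 where "X0 t = (2 powr p0 * t powr p0 / \<Psi> t) / (1 - 2 powr (p0 - p))" for t
  define X1 where "X1 t = (D * 2 powr q * t powr p1 / \<Psi> t) / (1 - 2 powr (q - p1))" for t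
  have b0: "(\<integral>\<^sup>+x. ennreal (if t < cmod (f x) then cmod (f x) powr p0 else 0) \<partial>lebesgue) \<le> ennreal (X0 t)" if t: "t > 0" for t
    unfolding X0_def by (rule weak_I0[OF zm W _ _ t]) (use p01 in auto)
  have b1: "(\<integral>\<^sup>+x. ennreal (if t < cmod (f x) then 0 else cmod (f x) powr p1) \<partial>lebesgue) \<le> ennreal (X1 t)" if t: "t > 0" for t
    unfolding X1_def by (rule weak_I1[OF zm _ W _ t]) (use p01 in auto)
  have fin0: "(\<integral>\<^sup>+x. ennreal (if t < cmod (f x) then cmod (f x) powr p0 else 0) \<partial>lebesgue) < \<infinity>" if t: "t > 0" for t
    using b0[OF t] by (simp add: order_le_less_trans)
  have fin1: "(\<integral>\<^sup>+x. ennreal (if t < cmod (f x) then 0 else cmod (f x) powr p1) \<partial>lebesgue) < \<infinity>" if t: "t > 0" for t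
    using b1[OF t] by (simp add: order_le_less_trans)
  note d = dist_est[OF Tlin _ _ T0 T1 fm _ fin0 fin1]
  show "T f \<in> borel_measurable lebesgue" using d(1)[of 1] p01 by auto
  fix t :: real assume t: "t > 0"
  have pt: "\<Psi> t > 0" using pos t by auto
  have A0: "C0 powr p0 / t powr p0 \<ge> 0" "C1 powr p1 / t powr p1 \<ge> 0" by auto
  have X: "X0 t \<ge> 0" "X1 t \<ge> 0" unfolding X0_def X1_def using pt r D_pos by auto
  have "ennreal (\<Psi> t) * emeasure lebesgue {x. 2 * t < cmod (T f x)}
     \<le> ennreal (\<Psi> t) * (ennreal (C0 powr p0 / t powr p0) * ennreal (X0 t) + ennreal (C1 powr p1 / t powr p1) * ennreal (X1 t))"
  proof (rule mult_left_mono)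
    have "emeasure lebesgue {x. 2 * t < cmod (T f x)}
       \<le> ennreal (C0 powr p0 / t powr p0) * (\<integral>\<^sup>+x. ennreal (if t < cmod (f x) then cmod (f x) powr p0 else 0) \<partial>lebesgue)
         + ennreal (C1 powr p1 / t powr p1) * (\<integral>\<^sup>+x. ennreal (if t < cmod (f x) then 0 else cmod (f x) powr p1) \<partial>lebesgue)"
      by (rule d(2)) (use p01 t in auto)
    also have "\<dots> \<le> ennreal (C0 powr p0 / t powr p0) * ennreal (X0 t) + ennreal (C1 powr p1 / t powr p1) * ennreal (X1 t)"
      using b0[OF t] b1[OF t] by (intro add_mono mult_left_mono) auto
    finally show "emeasure lebesgue {x. 2 * t < cmod (T f x)} \<le> ennreal (C0 powr p0 / t powr p0) * ennreal (X0 t) + ennreal (C1 powr p1 / t powr p1) * ennreal (X1 t)" .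
  qed simp
  also have "\<dots> = ennreal (\<Psi> t * (C0 powr p0 / t powr p0 * X0 t + C1 powr p1 / t powr p1 * X1 t))"
  proof -
    have e0: "ennreal (C0 powr p0 / t powr p0) * ennreal (X0 t) = ennreal (C0 powr p0 / t powr p0 * X0 t)"
      using A0 X by (intro ennreal_mult[symmetric]) auto
    have e1: "ennreal (C1 powr p1 / t powr p1) * ennreal (X1 t) = ennreal (C1 powr p1 / t powr p1 * X1 t)"
      using A0 X by (intro ennreal_mult[symmetric]) auto
    have e2: "ennreal (C0 powr p0 / t powr p0 * X0 t) + ennreal (C1 powr p1 / t powr p1 * X1 t)
        = ennreal (C0 powr p0 / t powr p0 * X0 t + C1 powr p1 / t powr p1 * X1 t)"
      using A0 X by (intro ennreal_plus[symmetric]) auto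
    have e3: "ennreal (\<Psi> t) * ennreal (C0 powr p0 / t powr p0 * X0 t + C1 powr p1 / t powr p1 * X1 t)
        = ennreal (\<Psi> t * (C0 powr p0 / t powr p0 * X0 t + C1 powr p1 / t powr p1 * X1 t))"
      using A0 X pt by (intro ennreal_mult[symmetric]) auto
    show ?thesis by (simp only: e0 e1 e2 e3)
  qed
  also have "\<Psi> t * (C0 powr p0 / t powr p0 * X0 t + C1 powr p1 / t powr p1 * X1 t)
      = C0 powr p0 * 2 powr p0 / (1 - 2 powr (p0 - p)) + C1 powr p1 * (D * 2 powr q) / (1 - 2 powr (q - p1))"
  proof -
    have nz: "1 - 2 powr (p0 - p) > 0" "1 - 2 powr (q - p1) > 0" using r by auto
    have "\<Psi> t * (C0 powr p0 / t powr p0 * X0 t) = C0 powr p0 * 2 powr p0 / (1 - 2 powr (p0 - p))"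
      unfolding X0_def using alg_aux[OF pt _ nz(1), of "t powr p0" "C0 powr p0" "2 powr p0"] t by simp
    moreover have "\<Psi> t * (C1 powr p1 / t powr p1 * X1 t) = C1 powr p1 * (D * 2 powr q) / (1 - 2 powr (q - p1))"
      unfolding X1_def using alg_aux[OF pt _ nz(2), of "t powr p1" "C1 powr p1" "D * 2 powr q"] t by simp
    ultimately show ?thesis by (simp add: distrib_left)
  qed
  finally show "ennreal (\<Psi> t) * emeasure lebesgue {x. 2 * t < cmod (T f x)}
      \<le> ennreal (C0 powr p0 * 2 powr p0 / (1 - 2 powr (p0 - p)) + C1 powr p1 * (D * 2 powr q) / (1 - 2 powr (q - p1)))" .
qed

theorem mainTheorem2:
  fixes \<Phi> :: "real \<Rightarrow> real"
    and a :: "'a::euclidean_space \<Rightarrow> complex"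
    and T :: "('a \<Rightarrow> complex) \<Rightarrow> ('a \<Rightarrow> complex)"
  assumes "strict_young \<Phi>"
    and "ess_bounded a"
    and "\<And>\<alpha>. mindex_abs \<alpha> \<le> DIM('a) div 2 + 1 \<Longrightarrow>
           \<exists>g. weak_mderiv (- {0}) \<alpha> a g \<and>
               (SUP R\<in>{0<..}. ennreal (R powr (2 * real (mindex_abs \<alpha>) - real DIM('a))) *
                   (\<integral>\<^sup>+ \<xi>\<in>annulus R. ennreal ((cmod (g \<xi>))\<^sup>2) \<partial>lebesgue)) < \<infinity>"
    and "is_multiplier_extension a T"
  shows "\<exists>C>0. (\<forall>f. in_orlicz \<Phi> f \<longrightarrow>
                    in_orlicz \<Phi> (T f) \<and> orlicz_norm \<Phi> (T f) \<le> C * orlicz_norm \<Phi> f) \<and>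
              (\<forall>f. in_weak_orlicz \<Phi> f \<longrightarrow>
                    in_weak_orlicz \<Phi> (T f) \<and> weak_orlicz_norm \<Phi> (T f) \<le> C * weak_orlicz_norm \<Phi> f)"
proof -
  obtain p q D where psi: "psi_fun \<Phi> p q D" using strict_young_psi[OF assms(1)] by blast
  interpret P: psi_fun \<Phi> p q D by (rule psi)
  define p0 where "p0 = (1 + p) / 2"
  define p1 where "p1 = q + p + 1"
  have p01: "1 < p0" "p0 < p" "q < p1" "p0 < p1" using P.p_gt P.q_ge unfolding p0_def p1_def by auto
  obtain C0 where C0: "C0 \<ge> 0" and T0: "\<forall>g. in_Lp p0 g \<longrightarrow> in_Lp p0 (T g) \<and>
     (\<integral>\<^sup>+x. ennreal (cmod (T g x) powr p0) \<partial>lebesgue) \<le> ennreal (C0 powr p0) * (\<integral>\<^sup>+x. ennreal (cmod (g x) powr p0) \<partial>lebesgue)"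
    using Lp_bound[OF assms(4), of p0] p01 by auto
  obtain C1 where C1: "C1 \<ge> 0" and T1: "\<forall>g. in_Lp p1 g \<longrightarrow> in_Lp p1 (T g) \<and>
     (\<integral>\<^sup>+x. ennreal (cmod (T g x) powr p1) \<partial>lebesgue) \<le> ennreal (C1 powr p1) * (\<integral>\<^sup>+x. ennreal (cmod (g x) powr p1) \<partial>lebesgue)"
    using Lp_bound[OF assms(4), of p1] p01 by auto
  have T0': "\<And>g. in_Lp p0 g \<Longrightarrow> in_Lp p0 (T g) \<and>
     (\<integral>\<^sup>+x. ennreal (cmod (T g x) powr p0) \<partial>lebesgue) \<le> ennreal (C0 powr p0) * (\<integral>\<^sup>+x. ennreal (cmod (g x) powr p0) \<partial>lebesgue)"
    using T0 by blast
  have T1': "\<And>g. in_Lp p1 g \<Longrightarrow> in_Lp p1 (T g) \<and>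
     (\<integral>\<^sup>+x. ennreal (cmod (T g x) powr p1) \<partial>lebesgue) \<le> ennreal (C1 powr p1) * (\<integral>\<^sup>+x. ennreal (cmod (g x) powr p1) \<partial>lebesgue)"
    using T1 by blast
  define Ks where "Ks = C0 powr p0 / (1 - 2 powr (p0 - p)) + C1 powr p1 * D / (1 - 2 powr (q - p1))"
  define Kw where "Kw = C0 powr p0 * 2 powr p0 / (1 - 2 powr (p0 - p)) + C1 powr p1 * (D * 2 powr q) / (1 - 2 powr (q - p1))"
  define K1 where "K1 = max Ks 1"
  define Kw1 where "Kw1 = max Kw 1"
  have K1: "K1 \<ge> 1" "Ks \<le> K1" unfolding K1_def by auto
  have Kw1: "Kw1 \<ge> 1" "Kw \<le> Kw1" unfolding Kw1_def by auto

  have sKey: "4 * K1 * s \<in> orlicz_set \<Phi> (T f) \<and> T f \<in> borel_measurable lebesgue"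
    if f: "in_orlicz \<Phi> f" and s: "s \<in> orlicz_set \<Phi> f" for f s
  proof -
    have s0: "s > 0" and I: "(\<integral>\<^sup>+x. ennreal (\<Phi> (cmod (f x) / s)) \<partial>lebesgue) \<le> 1"
      using s unfolding orlicz_set_def by auto
    have fm: "f \<in> borel_measurable lebesgue" using f unfolding in_orlicz_def by auto
    interpret Q: psi_fun "\<lambda>y. \<Phi> (y / s)" p q D by (rule psi_fun_scale[OF psi s0])
    note k = Q.strong_key[OF assms(4) p01 C0 C1 T0' T1' fm I]
    have Tm: "T f \<in> borel_measurable lebesgue" by (rule k(1))
    then have vm: "(\<lambda>x. cmod (T f x) / 4) \<in> borel_measurable lebesgue" by measurable
    have "(\<integral>\<^sup>+x. ennreal (\<Phi> (cmod (T f x) / (4 * K1 * s))) \<partial>lebesgue)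
        \<le> (\<integral>\<^sup>+x. ennreal (1 / K1) * ennreal (\<Phi> (cmod (T f x) / 4 / s)) \<partial>lebesgue)"
    proof (intro nn_integral_mono)
      fix x
      have "\<Phi> (cmod (T f x) / (4 * K1 * s)) = \<Phi> ((cmod (T f x) / 4) / K1 / s)" by (simp add: field_simps)
      also have "\<dots> \<le> \<Phi> (cmod (T f x) / 4 / s) / K1" using Q.div_le[of "cmod (T f x) / 4" K1] K1 by simp
      finally have "\<Phi> (cmod (T f x) / (4 * K1 * s)) \<le> 1 / K1 * \<Phi> (cmod (T f x) / 4 / s)" by simp
      then have "ennreal (\<Phi> (cmod (T f x) / (4 * K1 * s))) \<le> ennreal (1 / K1 * \<Phi> (cmod (T f x) / 4 / s))"
        by (rule ennreal_leI)
      also have "\<dots> = ennreal (1 / K1) * ennreal (\<Phi> (cmod (T f x) / 4 / s))"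
        using K1 Q.nonneg[of "cmod (T f x) / 4"] by (intro ennreal_mult) auto
      finally show "ennreal (\<Phi> (cmod (T f x) / (4 * K1 * s))) \<le> ennreal (1 / K1) * ennreal (\<Phi> (cmod (T f x) / 4 / s))" .
    qed
    also have "\<dots> = ennreal (1 / K1) * (\<integral>\<^sup>+x. ennreal (\<Phi> (cmod (T f x) / 4 / s)) \<partial>lebesgue)"
      using Q.meas_psi[OF vm] by (intro nn_integral_cmult) auto
    also have "\<dots> \<le> ennreal (1 / K1) * ennreal Ks"
      using k(2) unfolding Ks_def by (intro mult_left_mono) auto
    also have "\<dots> \<le> 1"
    proof -
      have "1 / K1 * Ks \<le> 1" using K1 by (simp add: field_simps)
      then have "ennreal (1 / K1 * Ks) \<le> 1" by (simp add: ennreal_le_1)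
      then show ?thesis using K1
        by (metis divide_nonneg_nonneg ennreal_mult'' ennreal_mult_le_mult_iff ennreal_neg le_numeral_extra(1) mult.commute mult_1 order_trans zero_le_one not_le)
    qed
    finally have "(\<integral>\<^sup>+x. ennreal (\<Phi> (cmod (T f x) / (4 * K1 * s))) \<partial>lebesgue) \<le> 1" .
    moreover have "4 * K1 * s > 0" using K1 s0 by auto
    ultimately show ?thesis using Tm unfolding orlicz_set_def by auto
  qed
  have wKey: "2 * Kw1 * s \<in> weak_orlicz_set \<Phi> (T f) \<and> T f \<in> borel_measurable lebesgue"
    if f: "in_weak_orlicz \<Phi> f" and s: "s \<in> weak_orlicz_set \<Phi> f" for f s
  proof -
    have s0: "s > 0" and I: "(SUP t\<in>{0<..}. ennreal (\<Phi> (t / s)) * distrib_fun f t) \<le> 1"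
      using s unfolding weak_orlicz_set_def by auto
    have W: "ennreal (\<Phi> (t / s)) * emeasure lebesgue {x. t < cmod (f x)} \<le> 1" if t: "t > 0" for t
      using I t unfolding distrib_fun_def by (auto simp: SUP_le_iff)
    have fm: "f \<in> borel_measurable lebesgue" using f unfolding in_weak_orlicz_def by auto
    interpret Q: psi_fun "\<lambda>y. \<Phi> (y / s)" p q D by (rule psi_fun_scale[OF psi s0])
    note k = Q.weak_key[OF assms(4) p01 C0 C1 T0' T1' fm W]
    have Tm: "T f \<in> borel_measurable lebesgue" by (rule k(1))
    have "(SUP u\<in>{0<..}. ennreal (\<Phi> (u / (2 * Kw1 * s))) * distrib_fun (T f) u) \<le> 1"
    proof (intro SUP_least)
      fix u :: real assume "u \<in> {0<..}"
      then have u: "u > 0" by simp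
      have "\<Phi> (u / (2 * Kw1 * s)) = \<Phi> ((u / 2) / Kw1 / s)" by (simp add: field_simps)
      also have "\<dots> \<le> \<Phi> (u / 2 / s) / Kw1" using Q.div_le[of "u / 2" Kw1] Kw1 u by simp
      finally have "\<Phi> (u / (2 * Kw1 * s)) \<le> 1 / Kw1 * \<Phi> (u / 2 / s)" by simp
      then have "ennreal (\<Phi> (u / (2 * Kw1 * s))) \<le> ennreal (1 / Kw1 * \<Phi> (u / 2 / s))"
        by (rule ennreal_leI)
      also have "\<dots> = ennreal (1 / Kw1) * ennreal (\<Phi> (u / 2 / s))"
        using Kw1 Q.nonneg[of "u / 2"] u by (intro ennreal_mult) auto
      finally have a: "ennreal (\<Phi> (u / (2 * Kw1 * s))) \<le> ennreal (1 / Kw1) * ennreal (\<Phi> (u / 2 / s))" .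
      have dset: "distrib_fun (T f) u = emeasure lebesgue {x. 2 * (u / 2) < cmod (T f x)}"
        unfolding distrib_fun_def by simp
      have "ennreal (\<Phi> (u / (2 * Kw1 * s))) * distrib_fun (T f) u
          \<le> ennreal (1 / Kw1) * (ennreal (\<Phi> (u / 2 / s)) * emeasure lebesgue {x. 2 * (u / 2) < cmod (T f x)})"
        unfolding dset using mult_right_mono[OF a, of "emeasure lebesgue {x. 2 * (u / 2) < cmod (T f x)}"]
        by (simp only: mult.assoc zero_le)
      also have "\<dots> \<le> ennreal (1 / Kw1) * ennreal Kw"
        using k(2)[of "u / 2"] u unfolding Kw_def by (intro mult_left_mono) auto
      also have "\<dots> \<le> 1"
      proof -
        have "1 / Kw1 * Kw \<le> 1" using Kw1 by (simp add: field_simps)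
        then have "ennreal (1 / Kw1 * Kw) \<le> 1" by (simp add: ennreal_le_1)
        then show ?thesis using Kw1
          by (metis divide_nonneg_nonneg ennreal_mult'' ennreal_mult_le_mult_iff ennreal_neg le_numeral_extra(1) mult.commute mult_1 order_trans zero_le_one not_le)
      qed
      finally show "ennreal (\<Phi> (u / (2 * Kw1 * s))) * distrib_fun (T f) u \<le> 1" .
    qed
    moreover have "2 * Kw1 * s > 0" using Kw1 s0 by auto
    ultimately show ?thesis using Tm unfolding weak_orlicz_set_def by auto
  qed
  define C where "C = max (4 * K1) (2 * Kw1)"
  have Cpos: "C > 0" unfolding C_def using K1 by auto
  have strong: "in_orlicz \<Phi> (T f) \<and> orlicz_norm \<Phi> (T f) \<le> C * orlicz_norm \<Phi> f" if f: "in_orlicz \<Phi> f" for f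
  proof -
    have ne: "orlicz_set \<Phi> f \<noteq> {}" using f unfolding in_orlicz_def by auto
    then obtain s where s: "s \<in> orlicz_set \<Phi> f" by auto
    have "in_orlicz \<Phi> (T f)" using sKey[OF f s] unfolding in_orlicz_def by auto
    moreover have "orlicz_norm \<Phi> (T f) \<le> (4 * K1) * orlicz_norm \<Phi> f \<and> orlicz_norm \<Phi> f \<ge> 0"
    proof -
      have a: "\<And>s. s \<in> orlicz_set \<Phi> f \<Longrightarrow> s > 0" "\<And>u. u \<in> orlicz_set \<Phi> (T f) \<Longrightarrow> u > 0"
        unfolding orlicz_set_def by auto
      have b: "\<And>s. s \<in> orlicz_set \<Phi> f \<Longrightarrow> 4 * K1 * s \<in> orlicz_set \<Phi> (T f)" using sKey[OF f] by blast
      show ?thesis using Inf_scale[OF ne a b] K1 unfolding orlicz_norm_def by auto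
    qed
    moreover have "(4 * K1) * orlicz_norm \<Phi> f \<le> C * orlicz_norm \<Phi> f"
      using calculation(2) unfolding C_def by (intro mult_right_mono) auto
    ultimately show ?thesis by auto
  qed
  have weak: "in_weak_orlicz \<Phi> (T f) \<and> weak_orlicz_norm \<Phi> (T f) \<le> C * weak_orlicz_norm \<Phi> f" if f: "in_weak_orlicz \<Phi> f" for f
  proof -
    have ne: "weak_orlicz_set \<Phi> f \<noteq> {}" using f unfolding in_weak_orlicz_def by auto
    then obtain s where s: "s \<in> weak_orlicz_set \<Phi> f" by auto
    have "in_weak_orlicz \<Phi> (T f)" using wKey[OF f s] unfolding in_weak_orlicz_def by auto
    moreover have "weak_orlicz_norm \<Phi> (T f) \<le> (2 * Kw1) * weak_orlicz_norm \<Phi> f \<and> weak_orlicz_norm \<Phi> f \<ge> 0"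
    proof -
      have a: "\<And>s. s \<in> weak_orlicz_set \<Phi> f \<Longrightarrow> s > 0" "\<And>u. u \<in> weak_orlicz_set \<Phi> (T f) \<Longrightarrow> u > 0"
        unfolding weak_orlicz_set_def by auto
      have b: "\<And>s. s \<in> weak_orlicz_set \<Phi> f \<Longrightarrow> 2 * Kw1 * s \<in> weak_orlicz_set \<Phi> (T f)" using wKey[OF f] by blast
      show ?thesis using Inf_scale[OF ne a b] Kw1 unfolding weak_orlicz_norm_def by auto
    qed
    moreover have "(2 * Kw1) * weak_orlicz_norm \<Phi> f \<le> C * weak_orlicz_norm \<Phi> f"
      using calculation(2) unfolding C_def by (intro mult_right_mono) auto
    ultimately show ?thesis by auto
  qed
  show ?thesis using Cpos strong weak by blast
qed

end
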